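(* Let $X$ be a Banach function space over a finite or $\sigma$-finite measure space $(\Omega,\Sigma,\mu)$ which satisfies the Komlós condition and the non-strict Opial property with respect to $\tau$. Let $C$ be a norm-closed convex bounded subset of $X$ and let $T:C\to C$ be an affine Lipschitzian mapping. If $$S(T)<\frac{1+r_\tau(1)}{t(C)},$$ then $T$ has a fixed point.
   Context: $\tau$ denotes the topology of convergence in measure if $\mu$ is finite, and of local convergence in measure if $\mu$ is $\sigma$-finite (along subsequences this is equivalent to $\mu$-a.e. convergence, and the quantities below may equivalently be defined with $\mu$-a.e. convergence in place of $\tau$-convergence). Komlós condition: for every bounded sequence $(f_n)\subset X$ there exist a subsequence $(g_n)$ of $(f_n)$ and $g\in X$ such that for every further subsequence $(h_n)$ of $(g_n)$, $\frac1n\sum_{i=1}^n h_i\to g$ $\mu$-a.e. Non-strict Opial property w.r.t. $\tau$: for every sequence $(x_n)$ $\tau$-converging to $x_0\in X$, $\liminf_n\|x_n-x_0\|\le\liminf_n\|x_n-x\|$ for all $x\in X$. Opial modulus: for $c\ge0$, $r_\tau(c)=\inf\{\liminf_n\|x_n-x\|-1\}$, the infimum over all $x\in X$ with $\|x\|\ge c$ and all $\tau$-null sequences $(x_n)\subset X$ with $\liminf_n\|x_n\|\ge1$. Coefficient: $t(C)=\inf\{\lambda\ge0:\ \inf_{c\in C}\limsup_n\|c-x_n\|\le\lambda\limsup_n\|x-x_n\|$ for all $(x_n)\subset C$, $x\in X$ with $x_n\to x$ in $\tau\}$. $T$ affine means $T(\lambda x+(1-\lambda)y)=\lambda Tx+(1-\lambda)Ty$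 for $x,y\in C$, $\lambda\in[0,1]$. For Lipschitzian $T$, $|T|=\sup\{\|Tx-Ty\|/\|x-y\|: x,y\in C, x\ne y\}$ and $S(T)=\liminf_n \frac{|T|+|T^2|+\cdots+|T^n|}{n}$. *)

theory Defs
  imports "HOL-Probability.Probability"
begin

text \<open>Elements of the Banach function space are represented by real-valued measurable
  functions on the measure space; the norm N respects a.e. equality (by the ideal property),
  so equality in X means equality mu-a.e.\<close>

definition fdiff :: "('a \<Rightarrow> real) \<Rightarrow> ('a \<Rightarrow> real) \<Rightarrow> 'a \<Rightarrow> real" where
  "fdiff f g = (\<lambda>w. f w - g w)"

definition banach_function_space ::
  "'a measure \<Rightarrow> ('a \<Rightarrow> real) set \<Rightarrow> (('a \<Rightarrow> real) \<Rightarrow> real) \<Rightarrow> bool" where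
  "banach_function_space M X N \<longleftrightarrow>
     X \<subseteq> borel_measurable M \<and>
     (\<forall>f\<in>X. \<forall>g\<in>borel_measurable M. (AE w in M. \<bar>g w\<bar> \<le> \<bar>f w\<bar>) \<longrightarrow> g \<in> X \<and> N g \<le> N f) \<and>
     (\<forall>f\<in>X. N f = 0 \<longleftrightarrow> (AE w in M. f w = 0)) \<and>
     (\<forall>f\<in>X. \<forall>c::real. N (\<lambda>w. c * f w) = \<bar>c\<bar> * N f) \<and>
     (\<forall>f\<in>X. \<forall>g\<in>X. (\<lambda>w. f w + g w) \<in> X \<and> N (\<lambda>w. f w + g w) \<le> N f + N g) \<and>
     (\<forall>s. (\<forall>n. s n \<in> X) \<and> (\<forall>e>0. \<exists>K. \<forall>m\<ge>K. \<forall>n\<ge>K. N (fdiff (s m) (s n)) < e)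
          \<longrightarrow> (\<exists>f\<in>X. (\<lambda>n. N (fdiff (s n) f)) \<longlonglongrightarrow> 0))"

definition tau_conv :: "'a measure \<Rightarrow> (nat \<Rightarrow> 'a \<Rightarrow> real) \<Rightarrow> ('a \<Rightarrow> real) \<Rightarrow> bool" where
  "tau_conv M s f \<longleftrightarrow>
     (\<forall>A\<in>sets M. emeasure M A < \<infinity> \<longrightarrow>
        (\<forall>e>0. (\<lambda>n. emeasure M {w\<in>A. e < \<bar>s n w - f w\<bar>}) \<longlonglongrightarrow> 0))"

definition komlos_condition ::
  "'a measure \<Rightarrow> ('a \<Rightarrow> real) set \<Rightarrow> (('a \<Rightarrow> real) \<Rightarrow> real) \<Rightarrow> bool" where
  "komlos_condition M X N \<longleftrightarrow>
     (\<forall>f. (\<forall>n. f n \<in> X) \<and> (\<exists>B. \<forall>n. N (f n) \<le> B) \<longrightarrow>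
        (\<exists>(\<sigma>::nat \<Rightarrow> nat) g. strict_mono \<sigma> \<and> g \<in> X \<and>
           (\<forall>\<rho>::nat \<Rightarrow> nat. strict_mono \<rho> \<longrightarrow>
              (AE w in M. (\<lambda>n. (\<Sum>i<n. f (\<sigma> (\<rho> i)) w) / real n) \<longlonglongrightarrow> g w))))"

definition nonstrict_opial ::
  "'a measure \<Rightarrow> ('a \<Rightarrow> real) set \<Rightarrow> (('a \<Rightarrow> real) \<Rightarrow> real) \<Rightarrow> bool" where
  "nonstrict_opial M X N \<longleftrightarrow>
     (\<forall>s x0. (\<forall>n. s n \<in> X) \<and> x0 \<in> X \<and> tau_conv M s x0 \<longrightarrow>
        (\<forall>x\<in>X. liminf (\<lambda>n. ereal (N (fdiff (s n) x0))) \<le> liminf (\<lambda>n. ereal (N (fdiff (s n) x)))))"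

definition opial_modulus ::
  "'a measure \<Rightarrow> ('a \<Rightarrow> real) set \<Rightarrow> (('a \<Rightarrow> real) \<Rightarrow> real) \<Rightarrow> real \<Rightarrow> ereal" where
  "opial_modulus M X N c =
     Inf {liminf (\<lambda>n. ereal (N (fdiff (s n) x))) - 1 | x s.
            x \<in> X \<and> N x \<ge> c \<and> (\<forall>n. s n \<in> X) \<and> tau_conv M s (\<lambda>_. 0) \<and>
            liminf (\<lambda>n. ereal (N (s n))) \<ge> 1}"

definition t_coeff ::
  "'a measure \<Rightarrow> ('a \<Rightarrow> real) set \<Rightarrow> (('a \<Rightarrow> real) \<Rightarrow> real) \<Rightarrow> ('a \<Rightarrow> real) set \<Rightarrow> ereal" where
  "t_coeff M X N C =
     Inf {ereal l | l. l \<ge> 0 \<and>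
            (\<forall>s x. (\<forall>n. s n \<in> C) \<and> x \<in> X \<and> tau_conv M s x \<longrightarrow>
               (INF c\<in>C. limsup (\<lambda>n. ereal (N (fdiff c (s n)))))
                 \<le> ereal l * limsup (\<lambda>n. ereal (N (fdiff x (s n)))))}"

definition norm_closed :: "('a \<Rightarrow> real) set \<Rightarrow> (('a \<Rightarrow> real) \<Rightarrow> real) \<Rightarrow> ('a \<Rightarrow> real) set \<Rightarrow> bool" where
  "norm_closed X N C \<longleftrightarrow>
     (\<forall>s x. (\<forall>n. s n \<in> C) \<and> x \<in> X \<and> (\<lambda>n. N (fdiff (s n) x)) \<longlonglongrightarrow> 0 \<longrightarrow> x \<in> C)"

definition fconvex :: "('a \<Rightarrow> real) set \<Rightarrow> bool" where
  "fconvex C \<longleftrightarrow> (\<forall>x\<in>C. \<forall>y\<in>C. \<forall>l::real. 0 \<le> l \<and> l \<le> 1 \<longrightarrow> (\<lambda>w. l * x w + (1 - l) * y w) \<in> C)"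

definition nbounded :: "(('a \<Rightarrow> real) \<Rightarrow> real) \<Rightarrow> ('a \<Rightarrow> real) set \<Rightarrow> bool" where
  "nbounded N C \<longleftrightarrow> (\<exists>B. \<forall>x\<in>C. N x \<le> B)"

definition affine_on :: "'a measure \<Rightarrow> ('a \<Rightarrow> real) set \<Rightarrow> (('a \<Rightarrow> real) \<Rightarrow> ('a \<Rightarrow> real)) \<Rightarrow> bool" where
  "affine_on M C T \<longleftrightarrow> (\<forall>x\<in>C. \<forall>y\<in>C. \<forall>l::real. 0 \<le> l \<and> l \<le> 1 \<longrightarrow>
      (AE w in M. T (\<lambda>v. l * x v + (1 - l) * y v) w = l * T x w + (1 - l) * T y w))"

definition lipschitzian :: "(('a \<Rightarrow> real) \<Rightarrow> real) \<Rightarrow> ('a \<Rightarrow> real) set \<Rightarrow> (('a \<Rightarrow> real) \<Rightarrow> ('a \<Rightarrow> real)) \<Rightarrow> bool" where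
  "lipschitzian N C T \<longleftrightarrow> (\<exists>k. \<forall>x\<in>C. \<forall>y\<in>C. N (fdiff (T x) (T y)) \<le> k * N (fdiff x y))"

text \<open>|T|: the smallest Lipschitz constant (x \<noteq> y in X means N(x - y) \<noteq> 0); 0 if no such pair.\<close>
definition lipconst :: "(('a \<Rightarrow> real) \<Rightarrow> real) \<Rightarrow> ('a \<Rightarrow> real) set \<Rightarrow> (('a \<Rightarrow> real) \<Rightarrow> ('a \<Rightarrow> real)) \<Rightarrow> real" where
  "lipconst N C T = Sup (insert 0 {N (fdiff (T x) (T y)) / N (fdiff x y) | x y.
                          x \<in> C \<and> y \<in> C \<and> N (fdiff x y) \<noteq> 0})"

definition S_coeff :: "(('a \<Rightarrow> real) \<Rightarrow> real) \<Rightarrow> ('a \<Rightarrow> real) set \<Rightarrow> (('a \<Rightarrow> real) \<Rightarrow> ('a \<Rightarrow> real)) \<Rightarrow> ereal" where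
  "S_coeff N C T = liminf (\<lambda>n. ereal ((\<Sum>k=1..n. lipconst N C (T ^^ k)) / real n))"

end

theory Submission
  imports Defs
begin

locale bfs =
  fixes M :: "'a measure" and X :: "('a \<Rightarrow> real) set" and N :: "('a \<Rightarrow> real) \<Rightarrow> real"
  assumes bfs: "banach_function_space M X N"
begin

lemma X_meas: "f \<in> X \<Longrightarrow> f \<in> borel_measurable M"
  using bfs unfolding banach_function_space_def by blast

lemma ideal: "f \<in> X \<Longrightarrow> g \<in> borel_measurable M \<Longrightarrow> (AE w in M. \<bar>g w\<bar> \<le> \<bar>f w\<bar>) \<Longrightarrow> g \<in> X \<and> N g \<le> N f"
  using bfs unfolding banach_function_space_def by blast

lemma N_zero_iff: "f \<in> X \<Longrightarrow> N f = 0 \<longleftrightarrow> (AE w in M. f w = 0)"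
  using bfs unfolding banach_function_space_def by blast

lemma N_scale: "f \<in> X \<Longrightarrow> N (\<lambda>w. c * f w) = \<bar>c\<bar> * N f"
  using bfs unfolding banach_function_space_def by blast

lemma X_add: "f \<in> X \<Longrightarrow> g \<in> X \<Longrightarrow> (\<lambda>w. f w + g w) \<in> X"
  using bfs unfolding banach_function_space_def by blast

lemma N_add: "f \<in> X \<Longrightarrow> g \<in> X \<Longrightarrow> N (\<lambda>w. f w + g w) \<le> N f + N g"
  using bfs unfolding banach_function_space_def by blast

lemma complete: "(\<forall>n. s n \<in> X) \<Longrightarrow> (\<forall>e>0. \<exists>K. \<forall>m\<ge>K. \<forall>n\<ge>K. N (fdiff (s m) (s n)) < e)
          \<Longrightarrow> (\<exists>f\<in>X. (\<lambda>n. N (fdiff (s n) f)) \<longlonglongrightarrow> 0)"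
  using bfs unfolding banach_function_space_def by blast

lemma X_pow2: "f \<in> X \<Longrightarrow> (\<lambda>w. 2^n * f w) \<in> X"
proof (induction n)
  case 0 then show ?case by simp
next
  case (Suc n)
  have "(\<lambda>w. 2^Suc n * f w) = (\<lambda>w. 2^n * f w + 2^n * f w)" by (auto simp: fun_eq_iff)
  then show ?case using X_add[OF Suc.IH[OF Suc.prems] Suc.IH[OF Suc.prems]] by simp
qed

lemma X_scale: assumes "f \<in> X" shows "(\<lambda>w. c * f w) \<in> X"
proof -
  obtain n where n: "\<bar>c\<bar> \<le> 2^n"
    using real_arch_pow[of 2 "\<bar>c\<bar>"] by (auto dest: less_imp_le)
  have m: "(\<lambda>w. c * f w) \<in> borel_measurable M" using X_meas[OF assms] by simp
  have "\<bar>c * f w\<bar> \<le> \<bar>2^n * f w\<bar>" for w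
    using n by (simp add: abs_mult mult_right_mono)
  then show ?thesis using ideal[OF X_pow2[OF assms, of n] m] by auto
qed

lemma X_lin: "f \<in> X \<Longrightarrow> g \<in> X \<Longrightarrow> (\<lambda>w. a * f w + b * g w) \<in> X"
  using X_add X_scale by blast

lemma N_lin: "f \<in> X \<Longrightarrow> g \<in> X \<Longrightarrow> N (\<lambda>w. a * f w + b * g w) \<le> \<bar>a\<bar> * N f + \<bar>b\<bar> * N g"
  using N_add[of "\<lambda>w. a * f w" "\<lambda>w. b * g w"] X_scale N_scale by auto

lemma X_diff: "f \<in> X \<Longrightarrow> g \<in> X \<Longrightarrow> fdiff f g \<in> X"
  using X_lin[of f g 1 "-1"] by (simp add: fdiff_def)

lemma zero_X: "f \<in> X \<Longrightarrow> (\<lambda>w. 0) \<in> X"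
  using X_scale[of f 0] by simp

lemma N_zero: "f \<in> X \<Longrightarrow> N (\<lambda>w. 0) = 0"
  using N_zero_iff[OF zero_X] by auto

lemma N_nonneg: "f \<in> X \<Longrightarrow> 0 \<le> N f"
  using ideal[of f "\<lambda>w. 0"] N_zero[of f] by auto

lemma N_ae_eq: "f \<in> X \<Longrightarrow> g \<in> borel_measurable M \<Longrightarrow> (AE w in M. f w = g w) \<Longrightarrow> g \<in> X \<and> N g = N f"
proof -
  assume a: "f \<in> X" "g \<in> borel_measurable M" "AE w in M. f w = g w"
  have "AE w in M. \<bar>g w\<bar> \<le> \<bar>f w\<bar>" using a(3) by eventually_elim auto
  then have 1: "g \<in> X \<and> N g \<le> N f" using ideal[OF a(1,2)] by auto
  have "AE w in M. \<bar>f w\<bar> \<le> \<bar>g w\<bar>" using a(3) by eventually_elim auto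
  then have "N f \<le> N g" using ideal[of g f] 1 a X_meas by auto
  then show ?thesis using 1 by auto
qed

lemma fdiff_X: "f \<in> X \<Longrightarrow> g \<in> X \<Longrightarrow> fdiff f g \<in> X" by (rule X_diff)

lemma N_sym: "f \<in> X \<Longrightarrow> g \<in> X \<Longrightarrow> N (fdiff f g) = N (fdiff g f)"
proof -
  assume "f \<in> X" "g \<in> X"
  then have "N (\<lambda>w. (-1) * fdiff f g w) = N (fdiff f g)" using N_scale[of "fdiff f g" "-1"] X_diff by simp
  moreover have "(\<lambda>w. (-1) * fdiff f g w) = fdiff g f" by (auto simp: fdiff_def fun_eq_iff)
  ultimately show ?thesis by simp
qed

lemma N_tri: "f \<in> X \<Longrightarrow> g \<in> X \<Longrightarrow> h \<in> X \<Longrightarrow> N (fdiff f h) \<le> N (fdiff f g) + N (fdiff g h)"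
proof -
  assume a: "f \<in> X" "g \<in> X" "h \<in> X"
  have "fdiff f h = (\<lambda>w. fdiff f g w + fdiff g h w)" by (auto simp: fdiff_def fun_eq_iff)
  then show ?thesis using N_add[of "fdiff f g" "fdiff g h"] a X_diff by simp
qed

lemma N_self: "f \<in> X \<Longrightarrow> N (fdiff f f) = 0"
  using N_zero[of f] by (simp add: fdiff_def)

lemma N_diff_zero_imp: "f \<in> X \<Longrightarrow> g \<in> X \<Longrightarrow> N (fdiff f g) = 0 \<Longrightarrow> AE w in M. f w = g w"
  using N_zero_iff[OF X_diff[of f g]] by (auto simp: fdiff_def)

lemma sum_X: "finite I \<Longrightarrow> (\<forall>i\<in>I. f i \<in> X) \<Longrightarrow> X \<noteq> {} \<Longrightarrow> (\<lambda>w. \<Sum>i\<in>I. f i w) \<in> X"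
proof (induction I rule: finite_induct)
  case empty then show ?case using zero_X by auto
next
  case (insert x F)
  then show ?case using X_add[of "f x" "\<lambda>w. \<Sum>i\<in>F. f i w"] by simp
qed

lemma N_sum: "finite I \<Longrightarrow> (\<forall>i\<in>I. f i \<in> X) \<Longrightarrow> X \<noteq> {} \<Longrightarrow> N (\<lambda>w. \<Sum>i\<in>I. f i w) \<le> (\<Sum>i\<in>I. N (f i))"
proof (induction I rule: finite_induct)
  case empty then show ?case using N_zero by auto
next
  case (insert x F)
  have sx: "(\<lambda>w. \<Sum>i\<in>F. f i w) \<in> X" using insert by (intro sum_X) auto
  have "N (\<lambda>w. \<Sum>i\<in>insert x F. f i w) = N (\<lambda>w. f x w + (\<Sum>i\<in>F. f i w))"
    using insert by simp
  also have "\<dots> \<le> N (f x) + N (\<lambda>w. \<Sum>i\<in>F. f i w)"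
    using N_add[OF _ sx, of "f x"] insert by simp
  finally have "N (\<lambda>w. \<Sum>i\<in>insert x F. f i w) \<le> N (f x) + N (\<lambda>w. \<Sum>i\<in>F. f i w)" .
  then show ?case using insert by simp
qed

end

definition ub :: "(nat \<Rightarrow> real) \<Rightarrow> real \<Rightarrow> bool" where
  "ub f b \<longleftrightarrow> (\<forall>e>0. eventually (\<lambda>i. f i \<le> b + e) sequentially)"

lemma ub_tendsto: "f \<longlonglongrightarrow> a \<Longrightarrow> ub f a"
  unfolding ub_def
proof (intro allI impI)
  fix e :: real assume "f \<longlonglongrightarrow> a" "e > 0"
  then have "eventually (\<lambda>i. dist (f i) a < e) sequentially" by (simp add: tendsto_iff)
  then show "eventually (\<lambda>i. f i \<le> a + e) sequentially"
    by eventually_elim (auto simp: dist_real_def)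
qed

lemma ub_mono: "eventually (\<lambda>i. f i \<le> g i) sequentially \<Longrightarrow> ub g b \<Longrightarrow> b \<le> b' \<Longrightarrow> ub f b'"
  unfolding ub_def
proof (intro allI impI)
  fix e :: real assume a: "eventually (\<lambda>i. f i \<le> g i) sequentially" "\<forall>e>0. eventually (\<lambda>i. g i \<le> b + e) sequentially" "b \<le> b'" "e > 0"
  then have "eventually (\<lambda>i. g i \<le> b + e) sequentially" by auto
  with a(1) show "eventually (\<lambda>i. f i \<le> b' + e) sequentially"
    by eventually_elim (use a(3) in auto)
qed

lemma ub_mono_all: "(\<And>i. f i \<le> g i) \<Longrightarrow> ub g b \<Longrightarrow> b \<le> b' \<Longrightarrow> ub f b'"
  by (rule ub_mono[of f g]) auto

lemma ub_add: "ub f a \<Longrightarrow> ub g b \<Longrightarrow> ub (\<lambda>i. f i + g i) (a + b)"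
  unfolding ub_def
proof (intro allI impI)
  fix e :: real assume a: "\<forall>e>0. eventually (\<lambda>i. f i \<le> a + e) sequentially"
    "\<forall>e>0. eventually (\<lambda>i. g i \<le> b + e) sequentially" "e > 0"
  then have "eventually (\<lambda>i. f i \<le> a + e/2) sequentially" "eventually (\<lambda>i. g i \<le> b + e/2) sequentially"
    by auto
  then show "eventually (\<lambda>i. f i + g i \<le> a + b + e) sequentially"
    by eventually_elim auto
qed

lemma ub_cmult: assumes "0 \<le> c" "ub f a" shows "ub (\<lambda>i. c * f i) (c * a)"
  unfolding ub_def
proof (intro allI impI)
  fix e :: real assume e: "e > 0"
  show "eventually (\<lambda>i. c * f i \<le> c * a + e) sequentially"
  proof (cases "c = 0")
    case True then show ?thesis using e by simp
  next
    case False
    then have "c > 0" using assms by auto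
    then have "eventually (\<lambda>i. f i \<le> a + e / c) sequentially" using assms(2) e unfolding ub_def by auto
    then show ?thesis
    proof eventually_elim
      case (elim i)
      then have "c * f i \<le> c * (a + e / c)" using \<open>c > 0\<close> by (intro mult_left_mono) auto
      moreover have "c * (a + e / c) = c * a + e" using \<open>c > 0\<close> by (simp add: field_simps)
      ultimately show ?case by linarith
    qed
  qed
qed

lemma ub_const: "c \<le> b \<Longrightarrow> ub (\<lambda>i. c) b"
  unfolding ub_def by auto

lemma ub_const_le: "ub (\<lambda>i. c) b \<Longrightarrow> c \<le> b"
proof (rule ccontr)
  assume a: "ub (\<lambda>i. c) b" "\<not> c \<le> b"
  then have "eventually (\<lambda>i. c \<le> b + (c - b)/2) sequentially" unfolding ub_def by auto
  then have "c \<le> b + (c - b)/2" by simp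
  then show False using a(2) by (simp add: field_simps)
qed

lemma ub_nonneg: "(\<And>i. 0 \<le> f i) \<Longrightarrow> ub f b \<Longrightarrow> 0 \<le> b"
  using ub_const_le[of 0 b] ub_mono_all[of "\<lambda>i. 0" f b b] by auto

lemma ub_sum: "finite I \<Longrightarrow> (\<forall>i\<in>I. ub (f i) (b i)) \<Longrightarrow> ub (\<lambda>n. \<Sum>i\<in>I. f i n) (\<Sum>i\<in>I. b i)"
proof (induction I rule: finite_induct)
  case empty then show ?case by (simp add: ub_const)
next
  case (insert x F)
  then show ?case using ub_add[of "f x" "b x" "\<lambda>n. \<Sum>i\<in>F. f i n" "\<Sum>i\<in>F. b i"] by simp
qed

lemma ub_subseq: "strict_mono \<sigma> \<Longrightarrow> ub f b \<Longrightarrow> ub (\<lambda>i. f (\<sigma> i)) b"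
  unfolding ub_def
  using eventually_subseq by blast

lemma ub_imp_eventually: "ub f b \<Longrightarrow> e > 0 \<Longrightarrow> eventually (\<lambda>i. f i \<le> b + e) sequentially"
  unfolding ub_def by auto

lemma ub_imp_limsup: assumes "ub f b" shows "limsup (\<lambda>i. ereal (f i)) \<le> ereal b"
proof (rule ereal_le_epsilon2)
  fix e :: real assume "0 < e"
  then have "eventually (\<lambda>i. ereal (f i) \<le> ereal (b + e)) sequentially"
    using assms unfolding ub_def by auto
  then have "limsup (\<lambda>i. ereal (f i)) \<le> ereal (b + e)" by (rule Limsup_bounded)
  then show "limsup (\<lambda>i. ereal (f i)) \<le> ereal b + ereal e" by simp
qed

lemma ub_imp_liminf: assumes "ub f b" shows "liminf (\<lambda>i. ereal (f i)) \<le> ereal b"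
  using ub_imp_limsup[OF assms] Liminf_le_Limsup[of sequentially "\<lambda>i. ereal (f i)"] by auto

lemma limsup_imp_ub: assumes "limsup (\<lambda>i. ereal (f i)) \<le> ereal b" shows "ub f b"
  unfolding ub_def
proof (intro allI impI)
  fix e :: real assume "0 < e"
  then have "ereal (b + e) > limsup (\<lambda>i. ereal (f i))" using assms by (auto intro: order.strict_trans1)
  then have "eventually (\<lambda>i. ereal (f i) < ereal (b + e)) sequentially" by (rule Limsup_lessD)
  then show "eventually (\<lambda>i. f i \<le> b + e) sequentially" by eventually_elim auto
qed

lemma ub_zero_tendsto: assumes "\<And>i. 0 \<le> f i" "ub f 0" shows "f \<longlonglongrightarrow> 0"
proof (rule tendstoI)
  fix e :: real assume "e > 0"
  have "\<forall>e>0. eventually (\<lambda>i. f i \<le> 0 + e) sequentially" using assms(2) unfolding ub_def by auto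
  then have "eventually (\<lambda>i. f i \<le> 0 + e/2) sequentially" using \<open>e > 0\<close> half_gt_zero by blast
  then show "eventually (\<lambda>i. dist (f i) 0 < e) sequentially"
    by eventually_elim (use assms(1) \<open>e>0\<close> in auto)
qed

lemma cesaro:
  fixes b :: "nat \<Rightarrow> real"
  assumes nn: "\<And>i. 0 \<le> b i" and lim: "b \<longlonglongrightarrow> 0"
  shows "(\<lambda>j. (\<Sum>i\<le>j. b i) / real (Suc j)) \<longlonglongrightarrow> 0"
proof (rule ub_zero_tendsto)
  show "0 \<le> (\<Sum>i\<le>j. b i) / real (Suc j)" for j using nn by (simp add: sum_nonneg)
  show "ub (\<lambda>j. (\<Sum>i\<le>j. b i) / real (Suc j)) 0"
    unfolding ub_def
  proof (intro allI impI)
    fix e :: real assume e: "e > 0"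
    have "eventually (\<lambda>i. dist (b i) 0 < e/2) sequentially" using lim e by (intro tendstoD) auto
    then have "eventually (\<lambda>i. b i < e/2) sequentially"
      by eventually_elim (auto simp: dist_real_def)
    then obtain K where K: "\<And>i. i \<ge> K \<Longrightarrow> b i < e/2" by (auto simp: eventually_sequentially)
    define S where "S = (\<Sum>i<K. b i)"
    have S0: "S \<ge> 0" unfolding S_def using nn by (simp add: sum_nonneg)
    obtain J :: nat where J: "2 * S / e \<le> J" using real_arch_simple by blast
    have "(\<Sum>i\<le>j. b i) / real (Suc j) \<le> 0 + e" if j: "j \<ge> J" for j
    proof -
      have "(\<Sum>i\<le>j. b i) \<le> S + real (Suc j) * (e/2)"
      proof -
        have "(\<Sum>i\<le>j. b i) \<le> (\<Sum>i<K. b i) + (\<Sum>i\<in>{K..j}. b i)"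
        proof -
          have "{..j} \<subseteq> {..<K} \<union> {K..j}" by auto
          then have "(\<Sum>i\<le>j. b i) \<le> (\<Sum>i\<in>{..<K} \<union> {K..j}. b i)"
            using nn by (intro sum_mono2) auto
          also have "\<dots> = (\<Sum>i<K. b i) + (\<Sum>i\<in>{K..j}. b i)"
            by (rule sum.union_disjoint) auto
          finally show ?thesis .
        qed
        also have "(\<Sum>i\<in>{K..j}. b i) \<le> (\<Sum>i\<in>{K..j}. e/2)"
          using K by (intro sum_mono) (auto intro: less_imp_le)
        also have "\<dots> = real (card {K..j}) * (e/2)" by simp
        also have "\<dots> \<le> real (Suc j) * (e/2)"
          using e by (intro mult_right_mono) auto
        finally show ?thesis unfolding S_def by simp
      qed
      moreover have "S \<le> real (Suc j) * (e/2)"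
      proof -
        have "2 * S / e \<le> real (Suc j)" using J j by simp
        then have "2 * S \<le> real (Suc j) * e" using e by (simp add: divide_le_eq)
        then show ?thesis by simp
      qed
      ultimately have "(\<Sum>i\<le>j. b i) \<le> real (Suc j) * e" by simp
      then show ?thesis by (simp add: divide_le_eq mult.commute)
    qed
    then show "eventually (\<lambda>j. (\<Sum>i\<le>j. b i) / real (Suc j) \<le> 0 + e) sequentially"
      by (auto simp: eventually_sequentially)
  qed
qed

lemma ae_tau:
  assumes mf: "\<And>n. f n \<in> borel_measurable M" and mg: "g \<in> borel_measurable M"
    and ae: "AE w in M. (\<lambda>n. f n w) \<longlonglongrightarrow> g w"
  shows "tau_conv M f g"
  unfolding tau_conv_def
proof (intro ballI impI allI)
  fix A e assume A: "A \<in> sets M" "emeasure M A < \<infinity>" and e: "(0::real) < e"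
  note [measurable] = mf mg
  define E where "E k = {w \<in> space M. e < \<bar>f k w - g w\<bar>}" for k
  have E[measurable]: "E k \<in> sets M" for k unfolding E_def by measurable
  define B where "B n = A \<inter> (\<Union>k\<in>{n..}. E k)" for n
  have Bs: "B n \<in> sets M" for n unfolding B_def using A by auto
  have Bdec: "decseq B" unfolding B_def decseq_def by auto (meson atLeast_iff le_trans)
  have Bfin: "emeasure M (B n) \<noteq> \<infinity>" for n
    using emeasure_mono[of "B n" A M] A unfolding B_def by (auto simp: top_unique)
  have "AE w in M. w \<notin> (\<Inter>n. B n)"
    using ae
  proof eventually_elim
    case (elim w)
    then have "eventually (\<lambda>k. \<bar>f k w - g w\<bar> < e) sequentially"
      using e by (auto simp: tendsto_iff dist_real_def)
    then obtain n where "\<And>k. k \<ge> n \<Longrightarrow> \<bar>f k w - g w\<bar> < e" by (auto simp: eventually_sequentially)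
    then have "w \<notin> B n" unfolding B_def E_def by (auto, fastforce)
    then show ?case by auto
  qed
  moreover have Is: "(\<Inter>n. B n) \<in> sets M" using Bs by auto
  ultimately have I0: "emeasure M (\<Inter>n. B n) = 0"
    using AE_iff_measurable[OF Is, of "\<lambda>w. w \<notin> (\<Inter>n. B n)"] sets.sets_into_space[OF Is] by auto
  have lim: "(\<lambda>n. emeasure M (B n)) \<longlonglongrightarrow> 0"
    using Lim_emeasure_decseq[of B M] Bs Bdec Bfin I0 by auto
  have le: "emeasure M {w \<in> A. e < \<bar>f n w - g w\<bar>} \<le> emeasure M (B n)" for n
    using sets.sets_into_space[OF A(1)] by (intro emeasure_mono[OF _ Bs]) (auto simp: B_def E_def)
  show "(\<lambda>n. emeasure M {w \<in> A. e < \<bar>f n w - g w\<bar>}) \<longlonglongrightarrow> 0"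
    by (rule tendsto_sandwich[of "\<lambda>n. 0" _ _ "\<lambda>n. emeasure M (B n)"]) (use le lim in auto)
qed

lemma tau_subseq: "strict_mono \<sigma> \<Longrightarrow> tau_conv M f g \<Longrightarrow> tau_conv M (\<lambda>n. f (\<sigma> n)) g"
  unfolding tau_conv_def using LIMSEQ_subseq_LIMSEQ[unfolded comp_def] by blast


definition avg :: "'i set \<Rightarrow> ('i \<Rightarrow> 'a \<Rightarrow> real) \<Rightarrow> 'a \<Rightarrow> real" where
  "avg I f = (\<lambda>w. (\<Sum>i\<in>I. f i w) / real (card I))"

lemma avg_ins_aux: assumes "(n::real) > 0" shows "(a + S) / (n + 1) = (1 / (n + 1)) * a + (1 - 1 / (n + 1)) * (S / n)"
proof -
  have "1 - 1/(n+1) = n/(n+1)" using assms by (simp add: field_simps)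
  then have "(1 - 1/(n+1))*(S/n) = S/(n+1)" using assms by simp
  then show ?thesis by (simp add: add_divide_distrib)
qed

lemma avg_insert:
  assumes "finite F" "x \<notin> F" "F \<noteq> {}"
  shows "avg (insert x F) f = (\<lambda>w. (1 / real (Suc (card F))) * f x w + (1 - 1 / real (Suc (card F))) * avg F f w)"
proof -
  have c: "real (card F) > 0" using assms by (simp add: card_gt_0_iff)
  show ?thesis unfolding avg_def
  proof (rule ext)
    fix w
    have s: "(\<Sum>i\<in>insert x F. f i w) = f x w + (\<Sum>i\<in>F. f i w)" using assms by simp
    have n: "real (card (insert x F)) = real (card F) + 1" using assms by simp
    show "(\<Sum>i\<in>insert x F. f i w) / real (card (insert x F)) =
      1 / real (Suc (card F)) * f x w + (1 - 1 / real (Suc (card F))) * ((\<Sum>i\<in>F. f i w) / real (card F))"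
      unfolding s n of_nat_Suc using avg_ins_aux[OF c, of "f x w" "\<Sum>i\<in>F. f i w"] by (simp add: add.commute)
  qed
qed

lemma avg_fdiff: "finite I \<Longrightarrow> I \<noteq> {} \<Longrightarrow> fdiff (avg I f) x = avg I (\<lambda>i. fdiff (f i) x)"
  unfolding avg_def fdiff_def
  by (auto simp: fun_eq_iff sum_subtractf field_simps)

lemma avg_fdiff2: "fdiff (avg I f) (avg I g) = avg I (\<lambda>i. fdiff (f i) (g i))"
  unfolding avg_def fdiff_def
  by (auto simp: fun_eq_iff sum_subtractf diff_divide_distrib)

locale fp = bfs M X N for M :: "'a measure" and X N +
  fixes C :: "('a \<Rightarrow> real) set" and T :: "('a \<Rightarrow> real) \<Rightarrow> ('a \<Rightarrow> real)"
  assumes CX: "C \<subseteq> X" and Cne: "C \<noteq> {}" and Ccl: "norm_closed X N C" and Ccv: "fconvex C"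
    and Cbd: "nbounded N C" and TC: "\<forall>x\<in>C. T x \<in> C" and Taff: "affine_on M C T"
    and Tlip: "lipschitzian N C T"
begin

lemma Xne: "X \<noteq> {}" using CX Cne by auto

lemma CXi: "x \<in> C \<Longrightarrow> x \<in> X" using CX by auto

lemma diam_ex: "\<exists>D\<ge>0. \<forall>x\<in>C. \<forall>y\<in>C. N (fdiff x y) \<le> D"
proof -
  obtain B where B: "\<forall>x\<in>C. N x \<le> B" using Cbd unfolding nbounded_def by auto
  have "N (fdiff x y) \<le> 2 * B" if "x \<in> C" "y \<in> C" for x y
  proof -
    have "N (fdiff x y) \<le> \<bar>1\<bar> * N x + \<bar>-1\<bar> * N y"
      using N_lin[of x y 1 "-1"] that CXi by (simp add: fdiff_def)
    moreover have "N x \<le> B" "N y \<le> B" using B that by auto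
    ultimately show ?thesis by simp
  qed
  moreover have "0 \<le> 2 * B" using B Cne N_nonneg CXi by (metis all_not_in_conv mult_nonneg_nonneg order_trans zero_le_numeral)
  ultimately show ?thesis by blast
qed

lemma TL_ex: "\<exists>L\<ge>0. \<forall>x\<in>C. \<forall>y\<in>C. N (fdiff (T x) (T y)) \<le> L * N (fdiff x y)"
proof -
  obtain k where k: "\<forall>x\<in>C. \<forall>y\<in>C. N (fdiff (T x) (T y)) \<le> k * N (fdiff x y)"
    using Tlip unfolding lipschitzian_def by auto
  have "N (fdiff (T x) (T y)) \<le> max k 0 * N (fdiff x y)" if "x \<in> C" "y \<in> C" for x y
  proof -
    have "0 \<le> N (fdiff x y)" using N_nonneg X_diff CXi that by auto
    then have "k * N (fdiff x y) \<le> max k 0 * N (fdiff x y)" by (intro mult_right_mono) auto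
    then show ?thesis using k that by (meson order_trans)
  qed
  then show ?thesis by (intro exI[of _ "max k 0"]) auto
qed

lemma Tpow_C: "x \<in> C \<Longrightarrow> (T ^^ j) x \<in> C"
  by (induction j) (auto simp: TC)

lemma Tpow_lip: "\<exists>L\<ge>0. \<forall>x\<in>C. \<forall>y\<in>C. N (fdiff ((T^^j) x) ((T^^j) y)) \<le> L * N (fdiff x y)"
proof (induction j)
  case 0 then show ?case by (intro exI[of _ 1]) auto
next
  case (Suc j)
  obtain L where L: "L \<ge> 0" "\<forall>x\<in>C. \<forall>y\<in>C. N (fdiff ((T^^j) x) ((T^^j) y)) \<le> L * N (fdiff x y)"
    using Suc by auto
  obtain L1 where L1: "L1 \<ge> 0" "\<forall>x\<in>C. \<forall>y\<in>C. N (fdiff (T x) (T y)) \<le> L1 * N (fdiff x y)"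
    using TL_ex by auto
  have "N (fdiff ((T^^Suc j) x) ((T^^Suc j) y)) \<le> (L1 * L) * N (fdiff x y)" if "x \<in> C" "y \<in> C" for x y
  proof -
    have "N (fdiff ((T^^Suc j) x) ((T^^Suc j) y)) \<le> L1 * N (fdiff ((T^^j) x) ((T^^j) y))"
      using L1 Tpow_C that by simp
    also have "\<dots> \<le> L1 * (L * N (fdiff x y))" using L that L1(1) by (intro mult_left_mono) auto
    finally show ?thesis by simp
  qed
  then show ?case using L L1 by (intro exI[of _ "L1 * L"]) auto
qed

lemma lipconst_pow: assumes "x \<in> C" "y \<in> C"
  shows "N (fdiff ((T^^j) x) ((T^^j) y)) \<le> lipconst N C (T^^j) * N (fdiff x y)"
proof -
  obtain L where L: "L \<ge> 0" "\<forall>x\<in>C. \<forall>y\<in>C. N (fdiff ((T^^j) x) ((T^^j) y)) \<le> L * N (fdiff x y)"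
    using Tpow_lip by blast
  define R where "R = {N (fdiff ((T^^j) x) ((T^^j) y)) / N (fdiff x y) |x y. x \<in> C \<and> y \<in> C \<and> N (fdiff x y) \<noteq> 0}"
  have bdd: "bdd_above (insert 0 R)"
  proof (rule bdd_aboveI[of _ L])
    fix z assume "z \<in> insert 0 R"
    then show "z \<le> L"
    proof
      assume "z = 0" then show ?thesis using L by simp
    next
      assume "z \<in> R"
      then obtain x y where xy: "x \<in> C" "y \<in> C" "N (fdiff x y) \<noteq> 0" and z: "z = N (fdiff ((T^^j) x) ((T^^j) y)) / N (fdiff x y)"
        unfolding R_def by auto
      have "N (fdiff x y) \<ge> 0" using xy N_nonneg X_diff CXi by blast
      then have "N (fdiff x y) > 0" using xy by auto
      then show ?thesis using L xy z by (simp add: divide_le_eq)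
    qed
  qed
  have lc: "lipconst N C (T^^j) = Sup (insert 0 R)" unfolding lipconst_def R_def by simp
  have lipconst_nonneg: "0 \<le> lipconst N C (T^^j)" unfolding lc using bdd by (intro cSup_upper) auto
  show ?thesis
  proof (cases "N (fdiff x y) = 0")
    case True
    then have "N (fdiff ((T^^j) x) ((T^^j) y)) \<le> 0" using L assms by fastforce
    then show ?thesis using True by simp
  next
    case False
    have "N (fdiff x y) \<ge> 0" using assms N_nonneg X_diff CXi by blast
    then have pos: "N (fdiff x y) > 0" using False by auto
    have "N (fdiff ((T^^j) x) ((T^^j) y)) / N (fdiff x y) \<in> insert 0 R" unfolding R_def using assms False by blast
    then have "N (fdiff ((T^^j) x) ((T^^j) y)) / N (fdiff x y) \<le> lipconst N C (T^^j)"
      unfolding lc using bdd by (intro cSup_upper) auto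
    then show ?thesis using pos by (simp add: divide_le_eq)
  qed
qed

lemma lipconst_pow_nonneg: "0 \<le> lipconst N C (T^^j)"
proof -
  obtain L where L: "L \<ge> 0" "\<forall>x\<in>C. \<forall>y\<in>C. N (fdiff ((T^^j) x) ((T^^j) y)) \<le> L * N (fdiff x y)"
    using Tpow_lip by blast
  define R where "R = {N (fdiff ((T^^j) x) ((T^^j) y)) / N (fdiff x y) |x y. x \<in> C \<and> y \<in> C \<and> N (fdiff x y) \<noteq> 0}"
  have bdd: "bdd_above (insert 0 R)"
  proof (rule bdd_aboveI[of _ L])
    fix z assume "z \<in> insert 0 R"
    then show "z \<le> L"
    proof
      assume "z = 0" then show ?thesis using L by simp
    next
      assume "z \<in> R"
      then obtain x y where xy: "x \<in> C" "y \<in> C" "N (fdiff x y) \<noteq> 0" and z: "z = N (fdiff ((T^^j) x) ((T^^j) y)) / N (fdiff x y)"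
        unfolding R_def by auto
      have "N (fdiff x y) \<ge> 0" using xy N_nonneg X_diff CXi by blast
      then have "N (fdiff x y) > 0" using xy by auto
      then show ?thesis using L xy z by (simp add: divide_le_eq)
    qed
  qed
  have lc: "lipconst N C (T^^j) = Sup (insert 0 R)" unfolding lipconst_def R_def by simp
  have lipconst_nonneg: "0 \<le> lipconst N C (T^^j)" unfolding lc using bdd by (intro cSup_upper) auto
  show ?thesis by (rule lipconst_nonneg)
qed

lemma avg_C: "finite I \<Longrightarrow> I \<noteq> {} \<Longrightarrow> (\<forall>i\<in>I. f i \<in> C) \<Longrightarrow> avg I f \<in> C"
proof (induction I rule: finite_ne_induct)
  case (singleton x)
  then show ?case by (simp add: avg_def)
next
  case (insert x F)
  have l: "0 \<le> 1 / real (Suc (card F))" "1 / real (Suc (card F)) \<le> 1" by auto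
  show ?case unfolding avg_insert[OF insert(1,3,2)]
    using Ccv l insert unfolding fconvex_def by blast
qed

lemma avg_X: "finite I \<Longrightarrow> (\<forall>i\<in>I. f i \<in> X) \<Longrightarrow> avg I f \<in> X"
proof -
  assume a: "finite I" "\<forall>i\<in>I. f i \<in> X"
  have "(\<lambda>w. (1 / real (card I)) * (\<Sum>i\<in>I. f i w)) \<in> X" using sum_X[OF a Xne] by (rule X_scale)
  then show ?thesis unfolding avg_def by simp
qed

lemma N_avg: "finite I \<Longrightarrow> (\<forall>i\<in>I. f i \<in> X) \<Longrightarrow> N (avg I f) \<le> (\<Sum>i\<in>I. N (f i)) / real (card I)"
proof -
  assume a: "finite I" "\<forall>i\<in>I. f i \<in> X"
  have "N (avg I f) = N (\<lambda>w. (1 / real (card I)) * (\<Sum>i\<in>I. f i w))" unfolding avg_def by simp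
  also have "\<dots> = (1 / real (card I)) * N (\<lambda>w. \<Sum>i\<in>I. f i w)"
    by (subst N_scale[OF sum_X[OF a Xne]]) simp
  also have "\<dots> \<le> (1 / real (card I)) * (\<Sum>i\<in>I. N (f i))"
    using N_sum[OF a Xne] by (intro mult_left_mono) auto
  finally show ?thesis by simp
qed

lemma T_cong: "x \<in> C \<Longrightarrow> y \<in> C \<Longrightarrow> (AE w in M. x w = y w) \<Longrightarrow> AE w in M. T x w = T y w"
proof -
  assume a: "x \<in> C" "y \<in> C" "AE w in M. x w = y w"
  obtain L where L: "L \<ge> 0" "\<forall>x\<in>C. \<forall>y\<in>C. N (fdiff (T x) (T y)) \<le> L * N (fdiff x y)" using TL_ex by auto
  have "AE w in M. fdiff x y w = 0" using a(3) by eventually_elim (simp add: fdiff_def)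
  then have "N (fdiff x y) = 0" using N_zero_iff X_diff CXi a by auto
  then have "N (fdiff (T x) (T y)) \<le> 0" using L a by fastforce
  then have "N (fdiff (T x) (T y)) = 0" using N_nonneg X_diff CXi TC a by (meson antisym)
  then show ?thesis using N_diff_zero_imp CXi TC a by blast
qed

lemma T_avg: "finite I \<Longrightarrow> I \<noteq> {} \<Longrightarrow> (\<forall>i\<in>I. f i \<in> C) \<Longrightarrow> AE w in M. T (avg I f) w = avg I (\<lambda>i. T (f i)) w"
proof (induction I rule: finite_ne_induct)
  case (singleton x)
  then show ?case by (simp add: avg_def)
next
  case (insert x F)
  define l where "l = 1 / real (Suc (card F))"
  have l: "0 \<le> l" "l \<le> 1" unfolding l_def by auto
  have e1: "avg (insert x F) f = (\<lambda>w. l * f x w + (1 - l) * avg F f w)"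
    unfolding l_def by (rule avg_insert[OF insert(1,3,2)])
  have e2: "avg (insert x F) (\<lambda>i. T (f i)) = (\<lambda>w. l * T (f x) w + (1 - l) * avg F (\<lambda>i. T (f i)) w)"
    unfolding l_def by (rule avg_insert[OF insert(1,3,2)])
  have fx: "f x \<in> C" and aF: "avg F f \<in> C" using insert avg_C by auto
  have "AE w in M. T (\<lambda>v. l * f x v + (1 - l) * avg F f v) w = l * T (f x) w + (1 - l) * T (avg F f) w"
    using Taff fx aF l unfolding affine_on_def by blast
  moreover have "AE w in M. T (avg F f) w = avg F (\<lambda>i. T (f i)) w" using insert by auto
  ultimately show ?case unfolding e1 e2 by eventually_elim auto
qed

definition A :: "nat \<Rightarrow> ('a \<Rightarrow> real) \<Rightarrow> 'a \<Rightarrow> real" where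
  "A p z = avg {1..p} (\<lambda>j. (T^^j) z)"

definition kk :: "nat \<Rightarrow> real" where
  "kk p = (\<Sum>j=1..p. lipconst N C (T^^j)) / real p"

lemma kk_nonneg: "0 \<le> kk p"
  unfolding kk_def using lipconst_pow_nonneg by (simp add: sum_nonneg)

lemma A_C: "p \<ge> 1 \<Longrightarrow> z \<in> C \<Longrightarrow> A p z \<in> C"
  unfolding A_def by (rule avg_C) (auto simp: Tpow_C)

lemma A_lip: assumes "p \<ge> 1" "x \<in> C" "y \<in> C"
  shows "N (fdiff (A p x) (A p y)) \<le> kk p * N (fdiff x y)"
proof -
  have "N (fdiff (A p x) (A p y)) = N (avg {1..p} (\<lambda>j. fdiff ((T^^j) x) ((T^^j) y)))"
    unfolding A_def avg_fdiff2 by simp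
  also have "\<dots> \<le> (\<Sum>j=1..p. N (fdiff ((T^^j) x) ((T^^j) y))) / real (card {1..p})"
    using assms by (intro N_avg) (auto intro!: X_diff[OF CXi CXi] Tpow_C)
  also have "\<dots> \<le> (\<Sum>j=1..p. lipconst N C (T^^j) * N (fdiff x y)) / real (card {1..p})"
    using assms lipconst_pow by (intro divide_right_mono sum_mono) auto
  also have "\<dots> = kk p * N (fdiff x y)" unfolding kk_def by (simp add: sum_distrib_right)
  finally show ?thesis .
qed

lemma A_approx: assumes "p \<ge> 1" "z \<in> C" "\<forall>x\<in>C. \<forall>y\<in>C. N (fdiff x y) \<le> D"
  shows "N (fdiff (T (A p z)) (A p z)) \<le> D / real p"
proof -
  have ae: "AE w in M. T (A p z) w = avg {1..p} (\<lambda>j. T ((T^^j) z)) w"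
    unfolding A_def using assms by (intro T_avg) (auto simp: Tpow_C)
  have eq: "fdiff (avg {1..p} (\<lambda>j. T ((T^^j) z))) (A p z) = (\<lambda>w. (1 / real p) * fdiff ((T^^Suc p) z) (T z) w)"
  proof -
    have "(\<Sum>j = 1..p. (T^^Suc j) z w - (T^^j) z w) = (T^^Suc p) z w - (T^^1) z w" for w
      using sum_Suc_diff[of 1 p "\<lambda>j. (T^^j) z w"] assms(1) by simp
    then show ?thesis unfolding A_def fdiff_def avg_def
      by (auto simp: fun_eq_iff sum_subtractf[symmetric] diff_divide_distrib[symmetric])
  qed
  have mem: "fdiff (T (A p z)) (A p z) \<in> X" using A_C assms TC CXi X_diff by auto
  have "AE w in M. fdiff (T (A p z)) (A p z) w = fdiff (avg {1..p} (\<lambda>j. T ((T^^j) z))) (A p z) w"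
    using ae by eventually_elim (simp add: fdiff_def)
  then have "AE w in M. fdiff (T (A p z)) (A p z) w = (\<lambda>w. (1 / real p) * fdiff ((T^^Suc p) z) (T z) w) w"
    unfolding eq by simp
  moreover have "(\<lambda>w. (1 / real p) * fdiff ((T^^Suc p) z) (T z) w) \<in> borel_measurable M"
    using X_meas[OF X_scale[OF X_diff[OF CXi CXi]]] Tpow_C TC assms by blast
  ultimately have "N (fdiff (T (A p z)) (A p z)) = N (\<lambda>w. (1 / real p) * fdiff ((T^^Suc p) z) (T z) w)"
    using N_ae_eq[OF mem] by auto
  also have "\<dots> = (1 / real p) * N (fdiff ((T^^Suc p) z) (T z))"
    by (subst N_scale[OF X_diff[OF CXi CXi]]) (use Tpow_C TC assms in auto)
  also have "\<dots> \<le> (1 / real p) * D"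
    using assms Tpow_C TC by (intro mult_left_mono) auto
  finally show ?thesis by simp
qed

lemma Tpow_disp: "\<exists>K\<ge>0. \<forall>x\<in>C. N (fdiff ((T^^j) x) x) \<le> K * N (fdiff (T x) x)"
proof (induction j)
  case 0
  then show ?case using N_self CXi by (intro exI[of _ 0]) auto
next
  case (Suc j)
  obtain K where K: "K \<ge> 0" "\<forall>x\<in>C. N (fdiff ((T^^j) x) x) \<le> K * N (fdiff (T x) x)" using Suc by auto
  obtain L where L: "L \<ge> 0" "\<forall>x\<in>C. \<forall>y\<in>C. N (fdiff ((T^^j) x) ((T^^j) y)) \<le> L * N (fdiff x y)"
    using Tpow_lip by blast
  have "N (fdiff ((T^^Suc j) x) x) \<le> (L + K) * N (fdiff (T x) x)" if x: "x \<in> C" for x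
  proof -
    have "(T^^Suc j) x = (T^^j) (T x)" by (simp add: funpow_swap1)
    then have "N (fdiff ((T^^Suc j) x) x) \<le> N (fdiff ((T^^j) (T x)) ((T^^j) x)) + N (fdiff ((T^^j) x) x)"
      using N_tri CXi Tpow_C TC x by metis
    also have "\<dots> \<le> L * N (fdiff (T x) x) + K * N (fdiff (T x) x)"
      using K L x TC by (intro add_mono) auto
    finally show ?thesis by (simp add: distrib_right)
  qed
  then show ?case using K L by (intro exI[of _ "L + K"]) auto
qed

lemma A_disp: assumes "p \<ge> 1" shows "\<exists>K\<ge>0. \<forall>x\<in>C. N (fdiff (A p x) x) \<le> K * N (fdiff (T x) x)"
proof -
  obtain Kf where Kf: "\<And>j. Kf j \<ge> 0" "\<And>j. \<forall>x\<in>C. N (fdiff ((T^^j) x) x) \<le> Kf j * N (fdiff (T x) x)"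
    using Tpow_disp by metis
  have "N (fdiff (A p x) x) \<le> ((\<Sum>j=1..p. Kf j) / real p) * N (fdiff (T x) x)" if x: "x \<in> C" for x
  proof -
    have "N (fdiff (A p x) x) = N (avg {1..p} (\<lambda>j. fdiff ((T^^j) x) x))"
      unfolding A_def using assms by (subst avg_fdiff) auto
    also have "\<dots> \<le> (\<Sum>j=1..p. N (fdiff ((T^^j) x) x)) / real (card {1..p})"
      using x by (intro N_avg) (auto intro!: X_diff[OF CXi CXi] Tpow_C)
    also have "\<dots> \<le> (\<Sum>j=1..p. Kf j * N (fdiff (T x) x)) / real (card {1..p})"
      using Kf x by (intro divide_right_mono sum_mono) auto
    also have "\<dots> = ((\<Sum>j=1..p. Kf j) / real p) * N (fdiff (T x) x)" by (simp add: sum_distrib_right)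
    finally show ?thesis .
  qed
  moreover have "0 \<le> (\<Sum>j=1..p. Kf j) / real p" using Kf by (simp add: sum_nonneg)
  ultimately show ?thesis by blast
qed

end

locale fp2 = fp M X N C T for M :: "'a measure" and X N C T +
  fixes \<kappa> l l0 r :: real and ps :: "nat \<Rightarrow> nat"
  assumes komlos: "komlos_condition M X N" and opial: "nonstrict_opial M X N"
    and ps_mono: "strict_mono ps" and ps0: "ps 0 \<ge> 1" and kk_ps: "\<forall>n. kk (ps n) \<le> \<kappa>"
    and l0: "0 \<le> l0" "l0 < l"
    and tprop: "\<forall>s x. (\<forall>n. s n \<in> C) \<and> x \<in> X \<and> tau_conv M s x \<longrightarrow>
               (INF c\<in>C. limsup (\<lambda>n. ereal (N (fdiff c (s n)))))
                 \<le> ereal l0 * limsup (\<lambda>n. ereal (N (fdiff x (s n))))"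
    and rle: "ereal r \<le> opial_modulus M X N 1" and kl: "\<kappa> * l < 1 + r"
begin

lemma kappa0: "0 \<le> \<kappa>" using kk_ps kk_nonneg order_trans by blast

lemma l_pos: "0 < l" using l0 by auto

lemma r_gt: "r > -1" using kl kappa0 l_pos by (smt (verit) mult_nonneg_nonneg)

definition lam :: real where "lam = (1 + \<kappa> * l) / (2 + r)"

lemma lam_ge0: "0 \<le> lam" unfolding lam_def using r_gt kappa0 l_pos by simp

lemma lam_lt1: "lam < 1" unfolding lam_def using r_gt kl by (simp add: divide_less_eq)

lemma ML1:
  assumes u: "\<forall>i. u i \<in> X" and tau: "tau_conv M u (\<lambda>_. 0)" and lim: "(\<lambda>i. N (u i)) \<longlonglongrightarrow> a"
    and a: "a > 0" and x: "x \<in> X" "N x \<ge> a" and ubb: "ub (\<lambda>i. N (fdiff (u i) x)) \<beta>"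
  shows "a * (1 + r) \<le> \<beta>"
proof -
  define s where "s i = (\<lambda>w. (1/a) * u i w)" for i
  define xx where "xx = (\<lambda>w. (1/a) * x w)"
  have sX: "\<forall>n. s n \<in> X" unfolding s_def by (intro allI X_scale) (use u in auto)
  have xxX: "xx \<in> X" unfolding xx_def by (intro X_scale) (use x in auto)
  have "N xx = N x / a" unfolding xx_def using N_scale[OF x(1), of "1/a"] a by simp
  then have Nxx: "N xx \<ge> 1" using a x(2) by (simp add: le_divide_eq)
  have taus: "tau_conv M s (\<lambda>_. 0)" unfolding tau_conv_def
  proof (intro ballI impI allI)
    fix B e assume B: "B \<in> sets M" "emeasure M B < \<infinity>" and e: "(0::real) < e"
    have "{w \<in> B. e < \<bar>s n w - 0\<bar>} = {w \<in> B. e * a < \<bar>u n w - 0\<bar>}" for n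
      unfolding s_def using a by (auto simp: abs_mult field_simps)
    moreover have "(\<lambda>n. emeasure M {w \<in> B. e * a < \<bar>u n w - 0\<bar>}) \<longlonglongrightarrow> 0"
      using tau B e a unfolding tau_conv_def by auto
    ultimately show "(\<lambda>n. emeasure M {w \<in> B. e < \<bar>s n w - 0\<bar>}) \<longlonglongrightarrow> 0" by simp
  qed
  have Ns: "N (s n) = N (u n) / a" for n unfolding s_def using N_scale[of "u n" "1/a"] u a by simp
  have "(\<lambda>n. N (s n)) \<longlonglongrightarrow> a / a" unfolding Ns using lim a by (intro tendsto_divide) auto
  then have "(\<lambda>n. ereal (N (s n))) \<longlonglongrightarrow> ereal 1" using a by (simp add: tendsto_ereal)
  then have "liminf (\<lambda>n. ereal (N (s n))) = ereal 1"
    by (intro lim_imp_Liminf) auto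
  then have lis: "liminf (\<lambda>n. ereal (N (s n))) = 1" by (simp add: one_ereal_def)
  have "opial_modulus M X N 1 \<le> liminf (\<lambda>n. ereal (N (fdiff (s n) xx))) - 1"
    unfolding opial_modulus_def
    by (rule Inf_lower) (use sX xxX Nxx taus lis in \<open>intro CollectI exI[of _ xx] exI[of _ s], auto\<close>)
  moreover have "N (fdiff (s n) xx) = (1/a) * N (fdiff (u n) x)" for n
  proof -
    have "fdiff (s n) xx = (\<lambda>w. (1/a) * fdiff (u n) x w)"
      unfolding s_def xx_def fdiff_def by (simp add: fun_eq_iff diff_divide_distrib)
    then show ?thesis using N_scale[OF X_diff[OF _ x(1)], of "u n" "1/a"] u a by simp
  qed
  moreover have "ub (\<lambda>n. (1/a) * N (fdiff (u n) x)) ((1/a) * \<beta>)"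
    using ub_cmult[OF _ ubb, of "1/a"] a by simp
  ultimately have "opial_modulus M X N 1 \<le> liminf (\<lambda>n. ereal ((1/a) * N (fdiff (u n) x))) - 1"
    "liminf (\<lambda>n. ereal ((1/a) * N (fdiff (u n) x))) \<le> ereal ((1/a) * \<beta>)"
    using ub_imp_liminf by auto
  then have "opial_modulus M X N 1 \<le> ereal ((1/a) * \<beta>) - 1"
    using ereal_minus_mono[of "liminf (\<lambda>n. ereal ((1/a) * N (fdiff (u n) x)))" "ereal ((1/a) * \<beta>)" 1 1]
    by (meson order.refl order_trans)
  then have "ereal r \<le> ereal ((1/a) * \<beta>) - 1" using rle by (rule order_trans[rotated])
  then have "r \<le> (1/a) * \<beta> - 1" by (simp add: one_ereal_def)
  then have "a * (r + 1) \<le> \<beta>" using a by (simp add: field_simps)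
  then show ?thesis by (simp add: algebra_simps)
qed

lemma ML2:
  assumes w: "\<forall>i. w i \<in> C" and g: "g \<in> X" and tau: "tau_conv M w g"
    and lim: "(\<lambda>i. N (fdiff (w i) g)) \<longlonglongrightarrow> a" and y: "y \<in> X"
    and ubb: "ub (\<lambda>i. N (fdiff y (w i))) (\<kappa> * l * a)"
  shows "N (fdiff y g) \<le> lam * a"
proof -
  define u where "u i = fdiff (w i) g" for i
  define e where "e = fdiff y g"
  define b where "b = N e"
  define \<rho> where "\<rho> = \<kappa> * l * a"
  have uX: "\<forall>i. u i \<in> X" unfolding u_def using w g X_diff CXi by auto
  have eX: "e \<in> X" unfolding e_def using y g X_diff by auto
  have b0: "0 \<le> b" unfolding b_def using eX N_nonneg by auto
  have a0: "0 \<le> a"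
    using lim by (rule LIMSEQ_le_const) (use N_nonneg X_diff CXi w g in auto)
  have tauu: "tau_conv M u (\<lambda>_. 0)" using tau unfolding tau_conv_def u_def fdiff_def by simp
  have limu: "(\<lambda>i. N (u i)) \<longlonglongrightarrow> a" unfolding u_def using lim .
  have ue: "fdiff (u i) e = fdiff (w i) y" for i unfolding u_def e_def fdiff_def by auto
  have ubue: "ub (\<lambda>i. N (fdiff (u i) e)) \<rho>"
    unfolding ue \<rho>_def using ubb N_sym[OF CXi y] w by simp
  have bound: "b \<le> \<rho> + a"
  proof -
    have "b \<le> N (fdiff y (w i)) + N (fdiff (w i) g)" for i
      unfolding b_def e_def using N_tri[OF y CXi g] w by auto
    then have "ub (\<lambda>i. b) (\<rho> + a)"
      by (rule ub_mono_all) (use ub_add[OF ubb ub_tendsto[OF lim]] \<rho>_def in auto)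
    then show ?thesis by (rule ub_const_le)
  qed
  have lam0: "0 \<le> lam" by (rule lam_ge0)
  show ?thesis
  proof (cases "a = 0")
    case True
    then show ?thesis using bound b0 unfolding \<rho>_def b_def e_def by simp
  next
    case False
    then have apos: "a > 0" using a0 by auto
    show ?thesis
    proof (cases "b \<ge> a")
      case True
      have "a * (1 + r) \<le> \<rho>"
        by (rule ML1[OF uX tauu limu apos eX]) (use True ubue b_def in auto)
      then have "1 + r \<le> \<kappa> * l" unfolding \<rho>_def using apos by (simp add: mult.commute)
      then show ?thesis using kl by simp
    next
      case False
      then have ba: "b < a" by simp
      show ?thesis
      proof (cases "b = 0")
        case True
        then show ?thesis using lam0 a0 unfolding b_def e_def by simp
      next
        case False
        then have bpos: "b > 0" using b0 by simp
        define q where "q = a / b"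
        have q1: "q > 1" unfolding q_def using ba bpos by simp
        define e' where "e' = (\<lambda>w. q * e w)"
        have e'X: "e' \<in> X" unfolding e'_def by (intro X_scale eX)
        have Ne': "N e' = a" unfolding e'_def using N_scale[OF eX, of q] q1 bpos unfolding b_def q_def by simp
        have eq: "fdiff (u i) e' = (\<lambda>w. q * fdiff (u i) e w + (1 - q) * u i w)" for i
          unfolding e'_def fdiff_def by (auto simp: fun_eq_iff algebra_simps)
        have "N (fdiff (u i) e') \<le> q * N (fdiff (u i) e) + (q - 1) * N (u i)" for i
        proof -
          have "N (fdiff (u i) e') \<le> \<bar>q\<bar> * N (fdiff (u i) e) + \<bar>1 - q\<bar> * N (u i)"
            unfolding eq using N_lin[OF X_diff[OF _ eX] _, of "u i" "u i" q "1 - q"] uX by auto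
          then show ?thesis using q1 by simp
        qed
        moreover have "ub (\<lambda>i. q * N (fdiff (u i) e) + (q - 1) * N (u i)) (q * \<rho> + (q - 1) * a)"
          using ub_add[OF ub_cmult[OF _ ubue] ub_cmult[OF _ ub_tendsto[OF limu]], of q "q - 1"] q1 by simp
        ultimately have ub2: "ub (\<lambda>i. N (fdiff (u i) e')) (q * \<rho> + (q - 1) * a)"
          by (rule ub_mono_all) (rule order.refl)
        have "a * (1 + r) \<le> q * \<rho> + (q - 1) * a"
          by (rule ML1[OF uX tauu limu apos e'X]) (use Ne' ub2 in auto)
        then have "b * (a * (1 + r)) \<le> b * (q * \<rho> + (q - 1) * a)"
          using bpos by (intro mult_left_mono) auto
        also have "b * (q * \<rho> + (q - 1) * a) = a * \<rho> + (a - b) * a"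
        proof -
          have "b * q = a" unfolding q_def using bpos by simp
          then show ?thesis by (simp add: algebra_simps)
        qed
        finally have "a * (b * (1 + r)) \<le> a * (\<rho> + a - b)" by (simp add: algebra_simps)
        then have "b * (1 + r) \<le> \<rho> + a - b" using apos by simp
        then have "b * (2 + r) \<le> a * (1 + \<kappa> * l)" unfolding \<rho>_def by (simp add: algebra_simps)
        then have "b \<le> a * (1 + \<kappa> * l) / (2 + r)" using r_gt by (simp add: le_divide_eq)
        then show ?thesis unfolding lam_def b_def e_def by (simp add: mult.commute)
      qed
    qed
  qed
qed

end

context fp2
begin

definition Inv :: "('a \<Rightarrow> real) \<Rightarrow> (nat \<Rightarrow> 'a \<Rightarrow> real) \<Rightarrow> ('a \<Rightarrow> real) \<Rightarrow> real \<Rightarrow> bool" where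
  "Inv c w g a \<longleftrightarrow> c \<in> C \<and> (\<forall>i. w i \<in> C) \<and> g \<in> X \<and> tau_conv M w g \<and>
     (\<lambda>i. N (fdiff (w i) g)) \<longlonglongrightarrow> a \<and> (\<lambda>i. N (fdiff (T (w i)) (w i))) \<longlonglongrightarrow> 0 \<and>
     ub (\<lambda>i. N (fdiff c (w i))) (l * a)"

lemma ps_ge: "ps n \<ge> Suc n"
proof (induction n)
  case 0 then show ?case using ps0 by simp
next
  case (Suc n)
  have "ps n < ps (Suc n)" using ps_mono by (simp add: strict_mono_def)
  then show ?case using Suc by simp
qed

lemma Build:
  assumes z: "z \<in> C"
  shows "\<exists>c w g a. Inv c w g a \<and>
    (\<forall>w0 \<beta>. (\<forall>i. w0 i \<in> C) \<and> (\<lambda>i. N (fdiff (T (w0 i)) (w0 i))) \<longlonglongrightarrow> 0 \<and> ub (\<lambda>i. N (fdiff z (w0 i))) \<beta>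
       \<longrightarrow> (\<forall>j. ub (\<lambda>i. N (fdiff (w j) (w0 i))) (\<kappa> * \<beta>)))"
proof -
  obtain D where D: "D \<ge> 0" "\<forall>x\<in>C. \<forall>y\<in>C. N (fdiff x y) \<le> D" using diam_ex by auto
  obtain Bd where Bd: "\<forall>x\<in>C. N x \<le> Bd" using Cbd unfolding nbounded_def by auto
  define v where "v n = A (ps n) z" for n
  have ps1: "ps n \<ge> 1" for n using ps_ge[of n] by simp
  have vC: "v n \<in> C" for n unfolding v_def using A_C ps1 z by auto
  have vapp: "N (fdiff (T (v n)) (v n)) \<le> D / real (Suc n)" for n
  proof -
    have "N (fdiff (T (v n)) (v n)) \<le> D / real (ps n)" unfolding v_def using A_approx[OF ps1 z D(2)] .
    also have "\<dots> \<le> D / real (Suc n)" using ps_ge[of n] D(1) by (intro divide_left_mono) auto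
    finally show ?thesis .
  qed
  have "\<exists>(\<sigma>::nat \<Rightarrow> nat) g. strict_mono \<sigma> \<and> g \<in> X \<and>
           (\<forall>\<rho>::nat \<Rightarrow> nat. strict_mono \<rho> \<longrightarrow>
              (AE w in M. (\<lambda>n. (\<Sum>i<n. v (\<sigma> (\<rho> i)) w) / real n) \<longlonglongrightarrow> g w))"
    using komlos unfolding komlos_condition_def using vC CXi Bd by blast
  then obtain \<sigma> g where sg: "strict_mono \<sigma>" "g \<in> X"
    and kae: "\<forall>\<rho>::nat \<Rightarrow> nat. strict_mono \<rho> \<longrightarrow> (AE w in M. (\<lambda>n. (\<Sum>i<n. v (\<sigma> (\<rho> i)) w) / real n) \<longlonglongrightarrow> g w)"
    by blast
  have ae: "AE w in M. (\<lambda>n. (\<Sum>i<n. v (\<sigma> i) w) / real n) \<longlonglongrightarrow> g w"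
    using kae[rule_format, of id] by (simp add: strict_mono_def)
  define w' where "w' j = avg {..j} (\<lambda>i. v (\<sigma> i))" for j
  have w'C: "w' j \<in> C" for j unfolding w'_def by (rule avg_C) (use vC in auto)
  have ae': "AE w in M. (\<lambda>j. w' j w) \<longlonglongrightarrow> g w"
    using ae
  proof eventually_elim
    case (elim w)
    have "(\<lambda>j. w' j w) = (\<lambda>j. (\<Sum>i<Suc j. v (\<sigma> i) w) / real (Suc j))"
      unfolding w'_def avg_def by (auto simp: lessThan_Suc_atMost)
    then show ?case using LIMSEQ_Suc[OF elim] by simp
  qed
  have tau': "tau_conv M w' g"
    by (rule ae_tau[OF _ _ ae']) (use X_meas CXi w'C sg in auto)
  define b where "b i = N (fdiff (T (v (\<sigma> i))) (v (\<sigma> i)))" for i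
  have b0: "0 \<le> b i" for i unfolding b_def using N_nonneg X_diff CXi TC vC by auto
  have blim: "b \<longlonglongrightarrow> 0"
  proof (rule tendsto_sandwich[of "\<lambda>i. 0" _ _ "\<lambda>i. D / real (Suc i)"])
    show "eventually (\<lambda>i. 0 \<le> b i) sequentially" using b0 by auto
    have "b i \<le> D / real (Suc i)" for i
    proof -
      have "b i \<le> D / real (Suc (\<sigma> i))" unfolding b_def by (rule vapp)
      also have "\<dots> \<le> D / real (Suc i)" using seq_suble[OF sg(1), of i] D(1) by (intro divide_left_mono) auto
      finally show ?thesis .
    qed
    then show "eventually (\<lambda>i. b i \<le> D / real (Suc i)) sequentially" by auto
    show "(\<lambda>i. D / real (Suc i)) \<longlonglongrightarrow> 0" using LIMSEQ_Suc[OF lim_const_over_n[of D]] by simp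
  qed auto
  have w'app: "N (fdiff (T (w' j)) (w' j)) \<le> (\<Sum>i\<le>j. b i) / real (Suc j)" for j
  proof -
    have aeT: "AE w in M. T (w' j) w = avg {..j} (\<lambda>i. T (v (\<sigma> i))) w"
      unfolding w'_def by (rule T_avg) (use vC in auto)
    have eq: "fdiff (avg {..j} (\<lambda>i. T (v (\<sigma> i)))) (w' j) = avg {..j} (\<lambda>i. fdiff (T (v (\<sigma> i))) (v (\<sigma> i)))"
      unfolding w'_def by (rule avg_fdiff2)
    have memX: "avg {..j} (\<lambda>i. fdiff (T (v (\<sigma> i))) (v (\<sigma> i))) \<in> X"
      by (rule avg_X) (use X_diff CXi TC vC in auto)
    have mem: "fdiff (T (w' j)) (w' j) \<in> X" using X_diff CXi TC w'C by auto
    have "AE w in M. fdiff (T (w' j)) (w' j) w = avg {..j} (\<lambda>i. fdiff (T (v (\<sigma> i))) (v (\<sigma> i))) w"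
      using aeT unfolding eq[symmetric] by eventually_elim (simp add: fdiff_def)
    then have "N (fdiff (T (w' j)) (w' j)) = N (avg {..j} (\<lambda>i. fdiff (T (v (\<sigma> i))) (v (\<sigma> i))))"
      using N_ae_eq[OF mem X_meas[OF memX]] by auto
    also have "\<dots> \<le> (\<Sum>i\<le>j. N (fdiff (T (v (\<sigma> i))) (v (\<sigma> i)))) / real (card {..j})"
      by (rule N_avg) (use X_diff CXi TC vC in auto)
    finally show ?thesis unfolding b_def by simp
  qed
  have w'lim: "(\<lambda>j. N (fdiff (T (w' j)) (w' j))) \<longlonglongrightarrow> 0"
  proof (rule tendsto_sandwich[of "\<lambda>i. 0" _ _ "\<lambda>j. (\<Sum>i\<le>j. b i) / real (Suc j)"])
    show "eventually (\<lambda>i. 0 \<le> N (fdiff (T (w' i)) (w' i))) sequentially"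
      using N_nonneg X_diff CXi TC w'C by auto
    show "eventually (\<lambda>j. N (fdiff (T (w' j)) (w' j)) \<le> (\<Sum>i\<le>j. b i) / real (Suc j)) sequentially"
      using w'app by auto
    show "(\<lambda>j. (\<Sum>i\<le>j. b i) / real (Suc j)) \<longlonglongrightarrow> 0" by (rule cesaro[OF b0 blim])
  qed auto
  obtain \<theta> where th: "strict_mono \<theta>" "monoseq (\<lambda>n. N (fdiff (w' (\<theta> n)) g))"
    using seq_monosub[of "\<lambda>n. N (fdiff (w' n) g)"] by blast
  have "Bseq (\<lambda>n. N (fdiff (w' (\<theta> n)) g))"
  proof (rule BseqI')
    fix n
    have "N (fdiff (w' (\<theta> n)) g) \<le> \<bar>1\<bar> * N (w' (\<theta> n)) + \<bar>-1\<bar> * N g"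
      using N_lin[OF CXi[OF w'C] sg(2), where a=1 and b="-1"] by (simp add: fdiff_def)
    also have "\<dots> \<le> Bd + N g" using Bd w'C by simp
    finally show "norm (N (fdiff (w' (\<theta> n)) g)) \<le> Bd + N g"
      using N_nonneg X_diff CXi w'C sg(2) by simp
  qed
  then have "convergent (\<lambda>n. N (fdiff (w' (\<theta> n)) g))" using th(2) by (rule Bseq_monoseq_convergent)
  then obtain a where alim: "(\<lambda>n. N (fdiff (w' (\<theta> n)) g)) \<longlonglongrightarrow> a" by (auto simp: convergent_def)
  define w where "w n = w' (\<theta> n)" for n
  have wC: "\<forall>i. w i \<in> C" unfolding w_def using w'C by auto
  have tauw: "tau_conv M w g" unfolding w_def by (rule tau_subseq[OF th(1) tau'])
  have wlim: "(\<lambda>i. N (fdiff (w i) g)) \<longlonglongrightarrow> a" unfolding w_def by (rule alim)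
  have wapp: "(\<lambda>i. N (fdiff (T (w i)) (w i))) \<longlonglongrightarrow> 0"
    unfolding w_def using LIMSEQ_subseq_LIMSEQ[OF w'lim th(1)] by (simp add: comp_def)
  have a0: "0 \<le> a"
    using wlim by (rule LIMSEQ_le_const) (use N_nonneg X_diff CXi wC sg(2) in auto)
  have wlim': "(\<lambda>i. N (fdiff g (w i))) \<longlonglongrightarrow> a" using wlim N_sym[OF CXi sg(2)] wC by simp
  have "\<exists>c. c \<in> C \<and> ub (\<lambda>i. N (fdiff c (w i))) (l * a)"
  proof (cases "a = 0")
    case True
    then have gC: "g \<in> C" using Ccl wC sg(2) wlim unfolding norm_closed_def by blast
    show ?thesis using gC ub_tendsto[OF wlim'] True by auto
  next
    case False
    then have apos: "a > 0" using a0 by auto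
    have "limsup (\<lambda>n. ereal (N (fdiff g (w n)))) = ereal a"
      by (intro lim_imp_Limsup) (use wlim' in \<open>auto simp: tendsto_ereal\<close>)
    then have "(INF c\<in>C. limsup (\<lambda>n. ereal (N (fdiff c (w n))))) \<le> ereal (l0 * a)"
      using tprop[rule_format, of w g] wC sg(2) tauw by simp
    also have "\<dots> < ereal (l * a)" using l0 apos by simp
    finally obtain c where c: "c \<in> C" "limsup (\<lambda>n. ereal (N (fdiff c (w n)))) < ereal (l * a)"
      by (auto simp: INF_less_iff)
    then show ?thesis using limsup_imp_ub[of "\<lambda>n. N (fdiff c (w n))" "l * a"] by auto
  qed
  then obtain c where c: "c \<in> C" "ub (\<lambda>i. N (fdiff c (w i))) (l * a)" by blast
  have inv: "Inv c w g a" unfolding Inv_def using c wC sg(2) tauw wlim wapp by auto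
  have rel: "\<forall>j. ub (\<lambda>i. N (fdiff (w j) (w0 i))) (\<kappa> * \<beta>)"
    if w0: "\<forall>i. w0 i \<in> C" "(\<lambda>i. N (fdiff (T (w0 i)) (w0 i))) \<longlonglongrightarrow> 0" "ub (\<lambda>i. N (fdiff z (w0 i))) \<beta>" for w0 \<beta>
  proof
    fix j
    have \<beta>0: "0 \<le> \<beta>" using w0(3) by (rule ub_nonneg[rotated]) (use N_nonneg X_diff CXi z w0 in auto)
    have vrel: "ub (\<lambda>i. N (fdiff (v n) (w0 i))) (\<kappa> * \<beta>)" for n
    proof -
      obtain K where K: "K \<ge> 0" "\<forall>x\<in>C. N (fdiff (A (ps n) x) x) \<le> K * N (fdiff (T x) x)"
        using A_disp[OF ps1] by blast
      have "N (fdiff (v n) (w0 i)) \<le> kk (ps n) * N (fdiff z (w0 i)) + K * N (fdiff (T (w0 i)) (w0 i))" for i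
      proof -
        have "N (fdiff (v n) (w0 i)) \<le> N (fdiff (A (ps n) z) (A (ps n) (w0 i))) + N (fdiff (A (ps n) (w0 i)) (w0 i))"
          unfolding v_def by (rule N_tri) (use CXi A_C ps1 z w0 in auto)
        also have "\<dots> \<le> kk (ps n) * N (fdiff z (w0 i)) + K * N (fdiff (T (w0 i)) (w0 i))"
          using A_lip[OF ps1 z, of "w0 i" n] K w0 by (intro add_mono) auto
        finally show ?thesis .
      qed
      moreover have "ub (\<lambda>i. kk (ps n) * N (fdiff z (w0 i)) + K * N (fdiff (T (w0 i)) (w0 i))) (kk (ps n) * \<beta> + K * 0)"
        by (intro ub_add ub_cmult kk_nonneg K(1) ub_tendsto w0(3) w0(2)) 
      moreover have "kk (ps n) * \<beta> + K * 0 \<le> \<kappa> * \<beta>" using kk_ps \<beta>0 by (simp add: mult_right_mono)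
      ultimately show ?thesis by (rule ub_mono_all)
    qed
    define I where "I = {..\<theta> j}"
    have I: "finite I" "I \<noteq> {}" unfolding I_def by auto
    have "N (fdiff (w j) (w0 i)) \<le> (1 / real (card I)) * (\<Sum>q\<in>I. N (fdiff (v (\<sigma> q)) (w0 i)))" for i
    proof -
      have "fdiff (w j) (w0 i) = avg I (\<lambda>q. fdiff (v (\<sigma> q)) (w0 i))"
        unfolding w_def w'_def I_def by (rule avg_fdiff) auto
      then have "N (fdiff (w j) (w0 i)) = N (avg I (\<lambda>q. fdiff (v (\<sigma> q)) (w0 i)))" by simp
      also have "\<dots> \<le> (\<Sum>q\<in>I. N (fdiff (v (\<sigma> q)) (w0 i))) / real (card I)"
        by (rule N_avg) (use I X_diff CXi vC w0 in auto)
      finally show ?thesis by simp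
    qed
    note le = this
    have ubs: "ub (\<lambda>i. (1 / real (card I)) * (\<Sum>q\<in>I. N (fdiff (v (\<sigma> q)) (w0 i)))) ((1 / real (card I)) * (\<Sum>q\<in>I. \<kappa> * \<beta>))"
      by (intro ub_cmult ub_sum I ballI vrel) auto
    have eqk: "(1 / real (card I)) * (\<Sum>q\<in>I. \<kappa> * \<beta>) = \<kappa> * \<beta>" using I by simp
    show "ub (\<lambda>i. N (fdiff (w j) (w0 i))) (\<kappa> * \<beta>)"
      by (rule ub_mono_all[OF le ubs]) (simp only: eqk order.refl)
  qed
  show ?thesis using inv rel by blast
qed

end

context fp2
begin

lemma Inv_a0: assumes "Inv c w g a" shows "0 \<le> a"
proof -
  have h: "\<forall>i. w i \<in> C" "g \<in> X" "(\<lambda>i. N (fdiff (w i) g)) \<longlonglongrightarrow> a" using assms unfolding Inv_def by auto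
  have "0 \<le> N (fdiff (w n) g)" for n using h N_nonneg X_diff CXi by blast
  then show ?thesis
    by (intro LIMSEQ_le_const[OF h(3)]) auto
qed

lemma Step:
  assumes inv: "Inv c w g a"
  shows "\<exists>c' w' g' a'. Inv c' w' g' a' \<and> a' \<le> lam * a \<and> N (fdiff c' c) \<le> (2 * l + \<kappa> * l) * a"
proof -
  have cC: "c \<in> C" and wC: "\<forall>i. w i \<in> C" and gX: "g \<in> X" and tauw: "tau_conv M w g"
    and wlim: "(\<lambda>i. N (fdiff (w i) g)) \<longlonglongrightarrow> a" and wapp: "(\<lambda>i. N (fdiff (T (w i)) (w i))) \<longlonglongrightarrow> 0"
    and cub: "ub (\<lambda>i. N (fdiff c (w i))) (l * a)"
    using inv unfolding Inv_def by auto
  have a0: "0 \<le> a" using Inv_a0[OF inv] .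
  obtain c' w' g' a' where inv': "Inv c' w' g' a'" and
    rel: "\<forall>w0 \<beta>. (\<forall>i. w0 i \<in> C) \<and> (\<lambda>i. N (fdiff (T (w0 i)) (w0 i))) \<longlonglongrightarrow> 0 \<and> ub (\<lambda>i. N (fdiff c (w0 i))) \<beta>
       \<longrightarrow> (\<forall>j. ub (\<lambda>i. N (fdiff (w' j) (w0 i))) (\<kappa> * \<beta>))"
    using Build[OF cC] by blast
  have rel': "ub (\<lambda>i. N (fdiff (w' j) (w i))) (\<kappa> * l * a)" for j
    using rel[rule_format, of w "l * a"] wC wapp cub by (simp add: mult.assoc)
  have c'C: "c' \<in> C" and w'C: "\<forall>i. w' i \<in> C" and g'X: "g' \<in> X" and tau': "tau_conv M w' g'"
    and w'lim: "(\<lambda>i. N (fdiff (w' i) g')) \<longlonglongrightarrow> a'" and c'ub: "ub (\<lambda>i. N (fdiff c' (w' i))) (l * a')"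
    using inv' unfolding Inv_def by auto
  have bnd: "N (fdiff (w' j) g) \<le> lam * a" for j
    by (rule ML2[OF wC gX tauw wlim CXi rel']) (use w'C in auto)
  have "liminf (\<lambda>n. ereal (N (fdiff (w' n) g'))) \<le> liminf (\<lambda>n. ereal (N (fdiff (w' n) g)))"
    using opial gX g'X tau' w'C CXi unfolding nonstrict_opial_def by blast
  moreover have "liminf (\<lambda>n. ereal (N (fdiff (w' n) g'))) = ereal a'"
    by (intro lim_imp_Liminf) (use w'lim in \<open>auto simp: tendsto_ereal\<close>)
  moreover have "liminf (\<lambda>n. ereal (N (fdiff (w' n) g))) \<le> ereal (lam * a)"
    by (intro Liminf_le) (use bnd in auto)
  ultimately have "ereal a' \<le> ereal (lam * a)" by (metis order_trans)
  then have a'le: "a' \<le> lam * a" by simp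
  have dist: "N (fdiff c' c) \<le> l * a' + \<kappa> * l * a + l * a"
  proof (rule field_le_epsilon)
    fix e :: real assume e: "0 < e"
    have "eventually (\<lambda>j. N (fdiff c' (w' j)) \<le> l * a' + e/3) sequentially"
      using c'ub e by (intro ub_imp_eventually) auto
    then obtain j where j: "N (fdiff c' (w' j)) \<le> l * a' + e/3"
      by (auto simp: eventually_sequentially)
    have "eventually (\<lambda>i. N (fdiff (w' j) (w i)) \<le> \<kappa> * l * a + e/3) sequentially"
      using rel' e by (intro ub_imp_eventually) auto
    moreover have "eventually (\<lambda>i. N (fdiff c (w i)) \<le> l * a + e/3) sequentially"
      using cub e by (intro ub_imp_eventually) auto
    ultimately have "eventually (\<lambda>i. N (fdiff (w' j) (w i)) \<le> \<kappa> * l * a + e/3 \<and> N (fdiff c (w i)) \<le> l * a + e/3) sequentially"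
      by (rule eventually_conj)
    then obtain i where i: "N (fdiff (w' j) (w i)) \<le> \<kappa> * l * a + e/3" "N (fdiff c (w i)) \<le> l * a + e/3"
      by (auto simp: eventually_sequentially)
    have "N (fdiff c' c) \<le> N (fdiff c' (w' j)) + N (fdiff (w' j) c)"
      using N_tri CXi c'C w'C cC by blast
    also have "N (fdiff (w' j) c) \<le> N (fdiff (w' j) (w i)) + N (fdiff (w i) c)"
      using N_tri CXi w'C wC cC by blast
    also have "N (fdiff (w i) c) = N (fdiff c (w i))" using N_sym CXi wC cC by blast
    finally show "N (fdiff c' c) \<le> l * a' + \<kappa> * l * a + l * a + e" using i j by simp
  qed
  have "l * a' \<le> l * a" using a'le lam_lt1 a0 l_pos
    by (intro mult_left_mono) (auto intro: order_trans[OF _ mult_left_le_one_le[of a lam]] simp: lam_ge0)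
  then have "N (fdiff c' c) \<le> (2 * l + \<kappa> * l) * a" using dist by (simp add: algebra_simps)
  then show ?thesis using inv' a'le by blast
qed

lemma TL_ex': obtains L where "L \<ge> 0" "\<forall>x\<in>C. \<forall>y\<in>C. N (fdiff (T x) (T y)) \<le> L * N (fdiff x y)"
  using TL_ex by blast

lemma Inv_disp:
  assumes inv: "Inv c w g a" and L: "L \<ge> 0" "\<forall>x\<in>C. \<forall>y\<in>C. N (fdiff (T x) (T y)) \<le> L * N (fdiff x y)"
  shows "N (fdiff (T c) c) \<le> (L + 1) * l * a"
proof -
  have cC: "c \<in> C" and wC: "\<forall>i. w i \<in> C"
    and wapp: "(\<lambda>i. N (fdiff (T (w i)) (w i))) \<longlonglongrightarrow> 0"
    and cub: "ub (\<lambda>i. N (fdiff c (w i))) (l * a)"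
    using inv unfolding Inv_def by auto
  have "N (fdiff (T c) c) \<le> L * N (fdiff c (w i)) + N (fdiff (T (w i)) (w i)) + N (fdiff c (w i))" for i
  proof -
    have "N (fdiff (T c) c) \<le> N (fdiff (T c) (T (w i))) + N (fdiff (T (w i)) c)"
      using N_tri CXi TC cC wC by blast
    also have "N (fdiff (T (w i)) c) \<le> N (fdiff (T (w i)) (w i)) + N (fdiff (w i) c)"
      using N_tri CXi TC cC wC by blast
    also have "N (fdiff (w i) c) = N (fdiff c (w i))" using N_sym CXi cC wC by blast
    also have "N (fdiff (T c) (T (w i))) \<le> L * N (fdiff c (w i))" using L cC wC by blast
    finally show ?thesis by simp
  qed
  moreover have "ub (\<lambda>i. L * N (fdiff c (w i)) + N (fdiff (T (w i)) (w i)) + N (fdiff c (w i))) (L * (l * a) + 0 + l * a)"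
    by (intro ub_add ub_cmult L(1) cub ub_tendsto wapp)
  ultimately have "ub (\<lambda>i. N (fdiff (T c) c)) (L * (l * a) + 0 + l * a)"
    by (rule ub_mono_all) (rule order.refl)
  then have "N (fdiff (T c) c) \<le> L * (l * a) + 0 + l * a" by (rule ub_const_le)
  then show ?thesis by (simp add: algebra_simps)
qed

lemma fixed_point: "\<exists>x\<in>C. AE w in M. T x w = x w"
proof -
  obtain z0 where z0: "z0 \<in> C" using Cne by auto
  obtain c0 w0 g0 a0 where inv0: "Inv c0 w0 g0 a0" using Build[OF z0] by blast
  define K where "K = 2 * l + \<kappa> * l"
  have K0: "0 \<le> K" unfolding K_def using l_pos kappa0 by simp
  define P where "P = (\<lambda>(n::nat) (s :: ('a \<Rightarrow> real) \<times> (nat \<Rightarrow> 'a \<Rightarrow> real) \<times> ('a \<Rightarrow> real) \<times> real).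
     Inv (fst s) (fst (snd s)) (fst (snd (snd s))) (snd (snd (snd s))))"
  define Q where "Q = (\<lambda>(n::nat) (s :: ('a \<Rightarrow> real) \<times> (nat \<Rightarrow> 'a \<Rightarrow> real) \<times> ('a \<Rightarrow> real) \<times> real) (s' :: ('a \<Rightarrow> real) \<times> (nat \<Rightarrow> 'a \<Rightarrow> real) \<times> ('a \<Rightarrow> real) \<times> real).
     snd (snd (snd s')) \<le> lam * snd (snd (snd s)) \<and> N (fdiff (fst s') (fst s)) \<le> K * snd (snd (snd s)))"
  have "\<exists>f. \<forall>n. P n (f n) \<and> Q n (f n) (f (Suc n))"
  proof (rule dependent_nat_choice)
    show "\<exists>x. P 0 x" using inv0 unfolding P_def by (intro exI[of _ "(c0, w0, g0, a0)"]) simp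
    fix x n assume "P n x"
    then have "Inv (fst x) (fst (snd x)) (fst (snd (snd x))) (snd (snd (snd x)))" unfolding P_def by simp
    then obtain c' w' g' a' where "Inv c' w' g' a'" "a' \<le> lam * snd (snd (snd x))"
      "N (fdiff c' (fst x)) \<le> (2 * l + \<kappa> * l) * snd (snd (snd x))"
      using Step by blast
    then show "\<exists>y. P (Suc n) y \<and> Q n x y" unfolding P_def Q_def K_def
      by (intro exI[of _ "(c', w', g', a')"]) simp
  qed
  then obtain f where f: "\<And>n. P n (f n)" "\<And>n. Q n (f n) (f (Suc n))" by blast
  define cs where "cs n = fst (f n)" for n
  define as where "as n = snd (snd (snd (f n)))" for n
  have invn: "Inv (cs n) (fst (snd (f n))) (fst (snd (snd (f n)))) (as n)" for n
    using f(1)[of n] unfolding P_def cs_def as_def by simp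
  have csC: "cs n \<in> C" for n using invn[of n] unfolding Inv_def by auto
  have as0: "0 \<le> as n" for n using Inv_a0[OF invn[of n]] .
  have as_step: "as (Suc n) \<le> lam * as n" and cs_step: "N (fdiff (cs (Suc n)) (cs n)) \<le> K * as n" for n
    using f(2)[of n] unfolding Q_def cs_def as_def by auto
  have as_pow: "as n \<le> lam ^ n * as 0" for n
  proof (induction n)
    case 0 then show ?case by simp
  next
    case (Suc n)
    have "as (Suc n) \<le> lam * as n" by (rule as_step)
    also have "\<dots> \<le> lam * (lam ^ n * as 0)" using Suc lam_ge0 by (intro mult_left_mono) auto
    finally show ?case by simp
  qed
  have lam1: "0 < 1 - lam" using lam_lt1 by simp
  have cauchy_bd: "N (fdiff (cs n) (cs m)) \<le> K * as 0 * (lam ^ m - lam ^ n) / (1 - lam)" if "m \<le> n" for m n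
    using that
  proof (induction n rule: dec_induct)
    case base
    then show ?case using N_self CXi csC by simp
  next
    case (step n)
    have "N (fdiff (cs (Suc n)) (cs m)) \<le> N (fdiff (cs (Suc n)) (cs n)) + N (fdiff (cs n) (cs m))"
      using N_tri CXi csC by blast
    also have "\<dots> \<le> K * (lam ^ n * as 0) + K * as 0 * (lam ^ m - lam ^ n) / (1 - lam)"
      using cs_step[of n] mult_left_mono[OF as_pow[of n] K0] step.IH by linarith
    also have "\<dots> = K * as 0 * (lam ^ m - lam ^ Suc n) / (1 - lam)"
      using lam1 by (simp add: field_simps)
    finally show ?case .
  qed
  have cauchy_bd': "N (fdiff (cs n) (cs m)) \<le> K * as 0 * lam ^ k / (1 - lam)" if "k \<le> m" "k \<le> n" for m n k
  proof -
    have gen: "N (fdiff (cs n) (cs m)) \<le> K * as 0 * lam ^ k / (1 - lam)" if "m \<le> n" "k \<le> m" for m n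
    proof -
      have "N (fdiff (cs n) (cs m)) \<le> K * as 0 * (lam ^ m - lam ^ n) / (1 - lam)" using cauchy_bd that by blast
      also have "\<dots> \<le> K * as 0 * lam ^ k / (1 - lam)"
      proof -
        have "lam ^ m \<le> lam ^ k" using that lam_ge0 lam_lt1 by (intro power_decreasing) auto
        moreover have "0 \<le> lam ^ n" using lam_ge0 by simp
        ultimately have "lam ^ m - lam ^ n \<le> lam ^ k" by simp
        then show ?thesis using lam1 K0 as0[of 0]
          by (intro divide_right_mono mult_left_mono) auto
      qed
      finally show ?thesis .
    qed
    show ?thesis
    proof (cases "m \<le> n")
      case True then show ?thesis using gen that by blast
    next
      case False
      then have "N (fdiff (cs m) (cs n)) \<le> K * as 0 * lam ^ k / (1 - lam)" using gen[of n m] that by simp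
      then show ?thesis using N_sym CXi csC by metis
    qed
  qed
  have "\<exists>x\<in>X. (\<lambda>n. N (fdiff (cs n) x)) \<longlonglongrightarrow> 0"
  proof (rule complete)
    show "\<forall>n. cs n \<in> X" using csC CXi by blast
    show "\<forall>e>0. \<exists>k. \<forall>m\<ge>k. \<forall>n\<ge>k. N (fdiff (cs m) (cs n)) < e"
    proof (intro allI impI)
      fix e :: real assume e: "e > 0"
      have "(\<lambda>k. K * as 0 * lam ^ k / (1 - lam)) \<longlonglongrightarrow> K * as 0 * 0 / (1 - lam)"
        using lam_ge0 lam_lt1 by (intro tendsto_intros) auto
      then have "eventually (\<lambda>k. K * as 0 * lam ^ k / (1 - lam) < e) sequentially"
        using e by (auto dest: order_tendstoD)
      then obtain k where k: "K * as 0 * lam ^ k / (1 - lam) < e" by (auto simp: eventually_sequentially)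
      show "\<exists>k. \<forall>m\<ge>k. \<forall>n\<ge>k. N (fdiff (cs m) (cs n)) < e"
        using cauchy_bd' k by (intro exI[of _ k]) (meson le_less_trans)
    qed
  qed
  then obtain x where xX: "x \<in> X" and xlim: "(\<lambda>n. N (fdiff (cs n) x)) \<longlonglongrightarrow> 0" by blast
  have xC: "x \<in> C" using Ccl csC xX xlim unfolding norm_closed_def by blast
  obtain L where L: "L \<ge> 0" "\<forall>x\<in>C. \<forall>y\<in>C. N (fdiff (T x) (T y)) \<le> L * N (fdiff x y)"
    using TL_ex by blast
  have aslim: "as \<longlonglongrightarrow> 0"
  proof (rule tendsto_sandwich[of "\<lambda>n. 0" _ _ "\<lambda>n. lam ^ n * as 0"])
    show "(\<lambda>n. lam ^ n * as 0) \<longlonglongrightarrow> 0"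
      using lam_ge0 lam_lt1 tendsto_mult_left_zero[OF LIMSEQ_power_zero[of lam]] by auto
  qed (use as0 as_pow in auto)
  have bnd: "N (fdiff (T x) x) \<le> L * N (fdiff (cs n) x) + (L + 1) * l * as n + N (fdiff (cs n) x)" for n
  proof -
    have "N (fdiff (T x) x) \<le> N (fdiff (T x) (T (cs n))) + N (fdiff (T (cs n)) x)"
      using N_tri CXi TC xC csC by blast
    also have "N (fdiff (T (cs n)) x) \<le> N (fdiff (T (cs n)) (cs n)) + N (fdiff (cs n) x)"
      using N_tri CXi TC xC csC by blast
    also have "N (fdiff (T x) (T (cs n))) \<le> L * N (fdiff x (cs n))" using L xC csC by blast
    also have "N (fdiff x (cs n)) = N (fdiff (cs n) x)" using N_sym CXi xC csC by blast
    also have "N (fdiff (T (cs n)) (cs n)) \<le> (L + 1) * l * as n" by (rule Inv_disp[OF invn L])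
    finally show ?thesis by simp
  qed
  have "(\<lambda>n. L * N (fdiff (cs n) x) + (L + 1) * l * as n + N (fdiff (cs n) x)) \<longlonglongrightarrow> L * 0 + (L + 1) * l * 0 + 0"
    by (intro tendsto_intros xlim aslim)
  then have "N (fdiff (T x) x) \<le> L * 0 + (L + 1) * l * 0 + 0"
    by (rule LIMSEQ_le_const) (use bnd in auto)
  then have "N (fdiff (T x) x) \<le> 0" by simp
  then have "N (fdiff (T x) x) = 0" using N_nonneg X_diff CXi TC xC by (meson antisym)
  then have "AE w in M. T x w = x w" using N_diff_zero_imp CXi TC xC by blast
  then show ?thesis using xC by blast
qed

end

lemma choose_consts:
  fixes S R t :: ereal
  assumes h: "S < (1 + R) / t" and S0: "0 \<le> S" and t0: "0 \<le> t" and R1: "-1 \<le> R"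
  shows "\<exists>q l r. S < ereal q \<and> t < ereal l \<and> ereal r \<le> R \<and> q * l < 1 + r \<and> 0 < l"
proof -
  obtain q where q: "S < ereal q" "ereal q < (1 + R) / t" using ereal_dense2[OF h] by blast
  have qpos: "q > 0" using q S0 by (metis ereal_less(2) le_less_trans)
  obtain t' where t': "t = ereal t'" "t' \<ge> 0"
  proof (cases t)
    case (real r) then show ?thesis using that t0 by auto
  next
    case PInf then show ?thesis using q qpos by simp
  next
    case MInf then show ?thesis using t0 by simp
  qed
  have H: "ereal (q * t') < 1 + R"
  proof (cases "t' = 0")
    case True
    have "(1 + R) / t = (1 + R) * \<infinity>" using True t' by (simp add: divide_ereal_def)
    moreover have "1 + R \<noteq> 0"
    proof
      assume "1 + R = 0"
      then have "(1 + R) / t = 0" using True t' by (simp add: divide_ereal_def)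
      then show False using q qpos by simp
    qed
    moreover have "0 \<le> 1 + R"
    proof (cases R)
      case (real r) then have "-1 \<le> r" using R1 by (simp add: one_ereal_def)
      then show ?thesis using real by simp
    qed (use R1 in auto)
    ultimately have "0 < 1 + R" by (simp add: order_less_le)
    then show ?thesis using True by (simp add: zero_ereal_def)
  next
    case False
    then have tp: "ereal t' > 0" "ereal t' \<noteq> \<infinity>" using t' by auto
    have "ereal t' * ereal q < 1 + R" using q(2) ereal_less_divide_pos[OF tp] t' by simp
    then show ?thesis by (simp add: mult.commute)
  qed
  show ?thesis
  proof (cases R)
    case PInf
    show ?thesis
      by (intro exI[of _ q] exI[of _ "t' + 1"] exI[of _ "q * (t' + 1)"]) (use q t' PInf in auto)
  next
    case (real R')
    have H': "q * t' < 1 + R'" using H real by simp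
    define l where "l = t' + (1 + R' - q * t') / (2 * q)"
    have lt: "t' < l" unfolding l_def using H' qpos by simp
    have "q * l = q * t' + (1 + R' - q * t') / 2" unfolding l_def using qpos by (simp add: field_simps)
    then have "q * l < 1 + R'" using H' by (simp add: field_simps)
    then show ?thesis
      by (intro exI[of _ q] exI[of _ l] exI[of _ R']) (use q t' lt real in auto)
  next
    case MInf then show ?thesis using R1 by simp
  qed
qed

theorem mainTheorem2:
  fixes M :: "'a measure" and X :: "('a \<Rightarrow> real) set" and N :: "('a \<Rightarrow> real) \<Rightarrow> real"
    and C :: "('a \<Rightarrow> real) set" and T :: "('a \<Rightarrow> real) \<Rightarrow> ('a \<Rightarrow> real)"
  assumes "sigma_finite_measure M"
    and "banach_function_space M X N"
    and "komlos_condition M X N"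
    and "nonstrict_opial M X N"
    and "C \<subseteq> X" and "C \<noteq> {}"
    and "norm_closed X N C" and "fconvex C" and "nbounded N C"
    and "\<forall>x\<in>C. T x \<in> C"
    and "affine_on M C T" and "lipschitzian N C T"
    and "S_coeff N C T < (1 + opial_modulus M X N 1) / t_coeff M X N C"
  shows "\<exists>x\<in>C. AE w in M. T x w = x w"
proof -
  interpret F: fp M X N C T
    using assms by (unfold_locales) auto
  have Seq: "S_coeff N C T = liminf (\<lambda>n. ereal (F.kk n))"
    unfolding S_coeff_def F.kk_def by simp
  have S0: "0 \<le> S_coeff N C T"
    unfolding Seq by (intro Liminf_bounded always_eventually) (simp add: F.kk_nonneg)
  have t0: "0 \<le> t_coeff M X N C"
    unfolding t_coeff_def by (intro Inf_greatest) auto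
  have R1: "-1 \<le> opial_modulus M X N 1"
    unfolding opial_modulus_def
  proof (intro Inf_greatest)
    fix y assume "y \<in> {liminf (\<lambda>n. ereal (N (fdiff (s n) x))) - 1 | x s.
            x \<in> X \<and> N x \<ge> 1 \<and> (\<forall>n. s n \<in> X) \<and> tau_conv M s (\<lambda>_. 0) \<and>
            liminf (\<lambda>n. ereal (N (s n))) \<ge> 1}"
    then obtain x s where y: "y = liminf (\<lambda>n. ereal (N (fdiff (s n) x))) - 1" and xs: "x \<in> X" "\<forall>n. s n \<in> X"
      by blast
    have "0 \<le> liminf (\<lambda>n. ereal (N (fdiff (s n) x)))"
      by (intro Liminf_bounded) (use xs F.N_nonneg F.X_diff in auto)
    then show "-1 \<le> y" unfolding y by (cases "liminf (\<lambda>n. ereal (N (fdiff (s n) x)))") (auto simp: one_ereal_def)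
  qed
  obtain q l r where qlr: "S_coeff N C T < ereal q" "t_coeff M X N C < ereal l" "ereal r \<le> opial_modulus M X N 1"
    "q * l < 1 + r" "0 < l"
    using choose_consts[OF assms(13) S0 t0 R1] by blast
  obtain l0 where l0: "0 \<le> l0" "l0 < l"
    "\<forall>s x. (\<forall>n. s n \<in> C) \<and> x \<in> X \<and> tau_conv M s x \<longrightarrow>
            (INF c\<in>C. limsup (\<lambda>n. ereal (N (fdiff c (s n)))))
              \<le> ereal l0 * limsup (\<lambda>n. ereal (N (fdiff x (s n))))"
  proof -
    have "t_coeff M X N C < ereal l" by (rule qlr(2))
    then obtain y where "y \<in> {ereal l | l. l \<ge> 0 \<and>
            (\<forall>s x. (\<forall>n. s n \<in> C) \<and> x \<in> X \<and> tau_conv M s x \<longrightarrow>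
               (INF c\<in>C. limsup (\<lambda>n. ereal (N (fdiff c (s n)))))
                 \<le> ereal l * limsup (\<lambda>n. ereal (N (fdiff x (s n)))))}" "y < ereal l"
      unfolding t_coeff_def by (auto simp: Inf_less_iff)
    then show ?thesis using that by auto
  qed
  have freq: "\<forall>K. \<exists>n\<ge>K. F.kk n \<le> q"
  proof -
    have "\<not> (ereal q \<le> liminf (\<lambda>n. ereal (F.kk n)))" using qlr(1) Seq by auto
    then obtain y where y: "y < ereal q" "\<not> eventually (\<lambda>n. y < ereal (F.kk n)) sequentially"
      unfolding le_Liminf_iff by auto
    then have "frequently (\<lambda>n. \<not> y < ereal (F.kk n)) sequentially" by (simp add: not_eventually)
    then have "frequently (\<lambda>n. F.kk n \<le> q) sequentially"
    proof (rule frequently_elim1)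
      fix n assume "\<not> y < ereal (F.kk n)"
      then have "ereal (F.kk n) \<le> y" by (simp add: not_less)
      then have "ereal (F.kk n) < ereal q" using y(1) by (rule le_less_trans)
      then show "F.kk n \<le> q" by simp
    qed
    then show ?thesis by (simp add: frequently_sequentially)
  qed
  have "\<exists>ps. \<forall>n. (F.kk (ps n) \<le> q \<and> ps n \<ge> 1) \<and> ps n < ps (Suc n)"
  proof (rule dependent_nat_choice)
    show "\<exists>x. F.kk x \<le> q \<and> x \<ge> 1" using freq by blast
    fix x n assume "F.kk x \<le> q \<and> x \<ge> 1"
    then show "\<exists>y. (F.kk y \<le> q \<and> y \<ge> 1) \<and> x < y" using freq[rule_format, of "Suc x"] by auto
  qed
  then obtain ps where ps: "\<forall>n. F.kk (ps n) \<le> q" "\<forall>n. ps n \<ge> 1" "\<forall>n. ps n < ps (Suc n)" by blast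
  have psm: "strict_mono ps" using ps(3) by (simp add: strict_mono_Suc_iff)
  interpret G: fp2 M X N C T q l l0 r ps
    by (unfold_locales) (use assms ps psm l0 qlr in auto)
  show ?thesis by (rule G.fixed_point)
qed


end
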